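(* Let $x\in J$ and let $\mathcal I=\{I_i\}_{i\in F}$ and $\mathcal L=\{L_j\}_{j\in G}$ be $x$-norming partitions. Then there exists an $x$-norming partition $\mathcal N=\{N_p\}_{p\in H}$ such that (1) $\mathcal N\subset\mathcal I\cup\mathcal L$; (2) for every $i\in F$ there is a subinterval $H_i$ of $H$ with $I_i\cap\mathrm{supp}(x)=\bigcup_{p\in H_i}(N_p\cap\mathrm{supp}(x))$, and for every $j\in G$ there is a subinterval $H'_j$ of $H$ with $L_j\cap\mathrm{supp}(x)=\bigcup_{p\in H'_j}(N_p\cap\mathrm{supp}(x))$.
   Context: For a real sequence $x=(x(n))_{n\in\mathbb N}$ let $\|x\|_J=\sup\bigl(\sum_{i=1}^n|\sum_{k\in I_i}x(k)|^2\bigr)^{1/2}$ over all $n$ and all families of pairwise disjoint intervals $I_1,\dots,I_n$ of $\mathbb N$ (intervals: nonempty sets of consecutive positive integers, possibly infinite). $J=\{x:\|x\|_J<\infty\}$; for $x\in J$ and any interval $I$ the series $\sum_{k\in I}x(k)$ converges. $\mathrm{supp}(x)=\{n:x(n)\ne0\}$. A family of intervals $\mathcal I=\{I_i\}_{i\in F}$: $F=\{1,\dots,k\}$ or $F=\mathbb N$, each $I_i$ an interval, $\max I_i<\min I_{i+1}$ whenever $i+1\in F$; $\|x\|_{\mathcal I}=(\sum_{i\in F}|\sum_{k\in I_i}x(k)|^2)^{1/2}$; it is $x$-norming if $\|x\|_{\mathcal I}=\|x\|_J$. For nonempty $L\subset\mathbb N$, $\sup L=\max L$ if finite and $\infty$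 otherwise. An $x$-norming partition is an $x$-norming family with $\{\min I_i,\max I_i\}\subset\mathrm{supp}(x)$ for all $i<\sup F$, and, if $F$ is finite, $\min I_i\in\mathrm{supp}(x)$ and $\sup I_i=\sup\mathrm{supp}(x)$ for $i=\sup F$. *)

theory Defs
  imports Complex_Main "HOL-Library.Extended_Nat"
begin

text \<open>Sequences are functions nat => real; only indices n >= 1 matter
  (the natural numbers of the paper are the positive integers).\<close>

definition supp :: "(nat \<Rightarrow> real) \<Rightarrow> nat set" where
  "supp x = {n. 1 \<le> n \<and> x n \<noteq> 0}"

definition interval :: "nat set \<Rightarrow> bool" where
  "interval I \<longleftrightarrow> I \<noteq> {} \<and> I \<subseteq> {1..} \<and>
     (\<forall>a b c. a \<in> I \<longrightarrow> c \<in> I \<longrightarrow> a \<le> b \<longrightarrow> b \<le> c \<longrightarrow> b \<in> I)"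

definition isum :: "(nat \<Rightarrow> real) \<Rightarrow> nat set \<Rightarrow> real" where
  "isum x I = (if finite I then sum x I else (\<Sum>k. if k \<in> I then x k else 0))"

definition jvals :: "(nat \<Rightarrow> real) \<Rightarrow> real set" where
  "jvals x = {sqrt (\<Sum>i<n. \<bar>isum x (I i)\<bar>^2) | (n::nat) (I::nat \<Rightarrow> nat set).
      (\<forall>i<n. interval (I i)) \<and> (\<forall>i<n. \<forall>j<n. i \<noteq> j \<longrightarrow> I i \<inter> I j = {})}"

definition in_J :: "(nat \<Rightarrow> real) \<Rightarrow> bool" where
  "in_J x \<longleftrightarrow> bdd_above (jvals x)"

definition jnorm :: "(nat \<Rightarrow> real) \<Rightarrow> real" where
  "jnorm x = Sup (jvals x)"

definition supE :: "nat set \<Rightarrow> enat" where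
  "supE L = (if finite L then enat (Max L) else \<infinity>)"

definition interval_family :: "nat set \<Rightarrow> (nat \<Rightarrow> nat set) \<Rightarrow> bool" where
  "interval_family F I \<longleftrightarrow>
     ((\<exists>k. F = {1..k}) \<or> F = {1..}) \<and>
     (\<forall>i\<in>F. interval (I i)) \<and>
     (\<forall>i. i \<in> F \<longrightarrow> Suc i \<in> F \<longrightarrow> (\<forall>a\<in>I i. \<forall>b\<in>I (Suc i). a < b))"

definition fam_norm :: "(nat \<Rightarrow> real) \<Rightarrow> nat set \<Rightarrow> (nat \<Rightarrow> nat set) \<Rightarrow> real" where
  "fam_norm x F I = sqrt (if finite F then (\<Sum>i\<in>F. \<bar>isum x (I i)\<bar>^2)
                          else (\<Sum>i. if i \<in> F then \<bar>isum x (I i)\<bar>^2 else 0))"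

definition norming_family :: "(nat \<Rightarrow> real) \<Rightarrow> nat set \<Rightarrow> (nat \<Rightarrow> nat set) \<Rightarrow> bool" where
  "norming_family x F I \<longleftrightarrow> interval_family F I \<and> fam_norm x F I = jnorm x"

definition norming_partition :: "(nat \<Rightarrow> real) \<Rightarrow> nat set \<Rightarrow> (nat \<Rightarrow> nat set) \<Rightarrow> bool" where
  "norming_partition x F I \<longleftrightarrow> norming_family x F I \<and>
     (\<forall>i\<in>F. enat i < supE F \<longrightarrow>
        finite (I i) \<and> Min (I i) \<in> supp x \<and> Max (I i) \<in> supp x) \<and>
     (finite F \<longrightarrow> (\<forall>i\<in>F. i = Max F \<longrightarrow>
        Min (I i) \<in> supp x \<and> supE (I i) = supE (supp x)))"

end

theory Submission
  imports Defs "HOL-Library.Infinite_Set"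
begin

section \<open>Intervals\<close>

lemma interval_conv: "interval K \<Longrightarrow> a \<in> K \<Longrightarrow> c \<in> K \<Longrightarrow> a \<le> b \<Longrightarrow> b \<le> c \<Longrightarrow> b \<in> K"
  unfolding interval_def by blast

lemma interval_ge1: "interval K \<Longrightarrow> n \<in> K \<Longrightarrow> 1 \<le> n"
  unfolding interval_def by auto

lemma interval_ne: "interval K \<Longrightarrow> K \<noteq> {}"
  unfolding interval_def by auto

lemma interval_inf_up: assumes "interval K" "infinite K" "a \<in> K" "a \<le> b" shows "b \<in> K"
proof -
  obtain c where "c \<in> K" "b \<le> c" using assms(2) unfolding infinite_nat_iff_unbounded_le by blast
  then show ?thesis using interval_conv[OF assms(1) assms(3)] assms(4) by blast
qed

lemma interval_fin_eq: assumes "interval K" "finite K" shows "K = {Min K..Max K}"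
proof -
  have ne: "K \<noteq> {}" using assms interval_ne by auto
  show ?thesis
  proof
    show "K \<subseteq> {Min K..Max K}" using assms ne by auto
    show "{Min K..Max K} \<subseteq> K"
    proof
      fix b assume "b \<in> {Min K..Max K}"
      then show "b \<in> K" using interval_conv[OF assms(1), of "Min K" "Max K" b] assms ne by auto
    qed
  qed
qed

lemma interval_order:
  assumes "interval K" "interval K'" "K \<inter> K' = {}" "a \<in> K" "b \<in> K'" "a < b" "u \<in> K" "v \<in> K'"
  shows "u < v"
proof (rule ccontr)
  assume "\<not> u < v"
  then have "v \<le> u" by simp
  show False
  proof (cases "v \<le> a")
    case True
    then have "a \<in> K'" using interval_conv[OF assms(2) assms(8) assms(5), of a] assms(6) by auto
    then show False using assms(3,4) by auto
  next
    case False
    then have "v \<in> K" using interval_conv[OF assms(1) assms(4) assms(7), of v] \<open>v \<le> u\<close> by auto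
    then show False using assms(3,8) by auto
  qed
qed

lemma interval_union: assumes "interval K" "interval K'" "K \<inter> K' \<noteq> {}" shows "interval (K \<union> K')"
proof -
  obtain w where w: "w \<in> K" "w \<in> K'" using assms(3) by auto
  have "b \<in> K \<union> K'" if "a \<in> K \<union> K'" "c \<in> K \<union> K'" "a \<le> b" "b \<le> c" for a b c
  proof -
    have "b \<in> K" if "a \<in> K" "c \<in> K" using interval_conv[OF assms(1)] that \<open>a \<le> b\<close> \<open>b \<le> c\<close> by blast
    moreover have "b \<in> K'" if "a \<in> K'" "c \<in> K'" using interval_conv[OF assms(2)] that \<open>a \<le> b\<close> \<open>b \<le> c\<close> by blast
    moreover have "b \<in> K \<union> K'" if "a \<in> K" "c \<in> K'"
    proof (cases "b \<le> w")
      case True then show ?thesis using interval_conv[OF assms(1) \<open>a \<in> K\<close> w(1)] \<open>a \<le> b\<close> by blast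
    next
      case False then show ?thesis using interval_conv[OF assms(2) w(2) \<open>c \<in> K'\<close>] \<open>b \<le> c\<close> by auto
    qed
    moreover have "b \<in> K \<union> K'" if "a \<in> K'" "c \<in> K"
    proof (cases "b \<le> w")
      case True then show ?thesis using interval_conv[OF assms(2) \<open>a \<in> K'\<close> w(2)] \<open>a \<le> b\<close> by blast
    next
      case False then show ?thesis using interval_conv[OF assms(1) w(1) \<open>c \<in> K\<close>] \<open>b \<le> c\<close> by auto
    qed
    ultimately show ?thesis using that by blast
  qed
  moreover have "K \<union> K' \<noteq> {}" using w by auto
  moreover have "K \<union> K' \<subseteq> {1..}" using assms(1,2) unfolding interval_def by blast
  ultimately show ?thesis unfolding interval_def by blast
qed


section \<open>Sums\<close>

definition ind :: "(nat \<Rightarrow> real) \<Rightarrow> nat set \<Rightarrow> nat \<Rightarrow> real" where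
  "ind x A = (\<lambda>k. if k \<in> A then x k else 0)"

lemma isum_empty[simp]: "isum x {} = 0" by (simp add: isum_def)

lemma JB:
  assumes J: "in_J x" and S: "finite S" and iv: "\<forall>s\<in>S. K s = {} \<or> interval (K s)"
    and dj: "\<forall>s\<in>S. \<forall>t\<in>S. s \<noteq> t \<longrightarrow> K s \<inter> K t = {}"
  shows "(\<Sum>s\<in>S. (isum x (K s))\<^sup>2) \<le> (jnorm x)\<^sup>2"
proof -
  define S' where "S' = {s\<in>S. K s \<noteq> {}}"
  have fS': "finite S'" using S S'_def by auto
  obtain h where h: "bij_betw h {0..<card S'} S'" using ex_bij_betw_nat_finite[OF fS'] by blast
  define n where "n = card S'"
  have hS: "h i \<in> S'" if "i < n" for i 
  proof -
    have "i \<in> {0..<card S'}" using that n_def by simp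
    then show ?thesis using bij_betwE[OF h] by blast
  qed
  have inj: "h i \<noteq> h j" if "i < n" "j < n" "i \<noteq> j" for i j
  proof -
    have "inj_on h {0..<card S'}" using h by (rule bij_betw_imp_inj_on)
    moreover have "i \<in> {0..<card S'}" "j \<in> {0..<card S'}" using that n_def by simp_all
    ultimately show ?thesis using that(3) inj_on_eq_iff by metis
  qed
  have mem: "sqrt (\<Sum>i<n. \<bar>isum x (K (h i))\<bar>^2) \<in> jvals x"
    unfolding jvals_def
  proof (intro CollectI exI conjI)
    show "\<forall>i<n. interval (K (h i))" using hS iv S'_def by blast
    show "\<forall>i<n. \<forall>j<n. i \<noteq> j \<longrightarrow> K (h i) \<inter> K (h j) = {}"
    proof (intro allI impI)
      fix i j assume "i < n" "j < n" "i \<noteq> j"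
      then show "K (h i) \<inter> K (h j) = {}" using hS[of i] hS[of j] inj[of i j] dj S'_def by blast
    qed
  qed (rule refl)
  have le: "sqrt (\<Sum>i<n. \<bar>isum x (K (h i))\<bar>^2) \<le> jnorm x"
    unfolding jnorm_def using cSup_upper[OF mem] J unfolding in_J_def by blast
  have "(\<Sum>i<n. \<bar>isum x (K (h i))\<bar>^2) = (\<Sum>s\<in>S'. (isum x (K s))\<^sup>2)"
  proof -
    have "(\<Sum>i<n. \<bar>isum x (K (h i))\<bar>^2) = (\<Sum>i\<in>{0..<card S'}. (\<lambda>s. (isum x (K s))\<^sup>2) (h i))"
      unfolding n_def atLeast0LessThan power2_abs by (rule refl)
    also have "\<dots> = (\<Sum>s\<in>S'. (isum x (K s))\<^sup>2)" by (rule sum.reindex_bij_betw[OF h])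
    finally show ?thesis .
  qed
  also have "\<dots> = (\<Sum>s\<in>S. (isum x (K s))\<^sup>2)"
    by (rule sum.mono_neutral_left) (use S in \<open>auto simp: S'_def\<close>)
  finally have eq: "(\<Sum>i<n. \<bar>isum x (K (h i))\<bar>^2) = (\<Sum>s\<in>S. (isum x (K s))\<^sup>2)" .
  have nn: "0 \<le> (\<Sum>s\<in>S. (isum x (K s))\<^sup>2)" by (meson sum_nonneg zero_le_power2)
  have "sqrt (\<Sum>s\<in>S. (isum x (K s))\<^sup>2) \<le> jnorm x" using le eq by simp
  then have "(sqrt (\<Sum>s\<in>S. (isum x (K s))\<^sup>2))\<^sup>2 \<le> (jnorm x)\<^sup>2"
    by (rule power_mono) (simp add: nn)
  then show ?thesis using nn by simp
qed

lemma t1: "(0::real) \<in> jvals x"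
  unfolding jvals_def
  apply (rule CollectI)
  apply (rule_tac x="0::nat" in exI)
  apply (rule_tac x="\<lambda>_. {}" in exI)
  apply simp
  done

lemma jnorm_nonneg: assumes "in_J x" shows "0 \<le> jnorm x"
proof -
  have "0 \<in> jvals x" by (rule t1)
  then show ?thesis using assms cSup_upper unfolding jnorm_def in_J_def by blast
qed


lemma interval_upto: assumes "1 \<le> m" "m < n" shows "interval {m..<n}"
  using assms unfolding interval_def by auto

lemma summable_x: assumes J: "in_J x" shows "summable x"
proof (rule ccontr)
  assume ns: "\<not> summable x"
  then obtain e where e: "e > 0" "\<forall>N. \<exists>m\<ge>N. \<exists>n. e \<le> \<bar>sum x {m..<n}\<bar>"
    unfolding summable_Cauchy by (auto simp: not_less)
  have fam: "\<exists>Is M. (\<forall>i<k. Is i = {} \<or> interval (Is i)) \<and> (\<forall>i<k. Is i \<subseteq> {..<M}) \<and>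
     (\<forall>i<k. e \<le> \<bar>isum x (Is i)\<bar>) \<and> (\<forall>i<k. \<forall>j<k. i \<noteq> j \<longrightarrow> Is i \<inter> Is j = {})" for k :: nat
  proof (induction k)
    case 0 show ?case by auto
  next
    case (Suc k)
    then obtain Is M where IH: "\<forall>i<k. Is i = {} \<or> interval (Is i)" "\<forall>i<k. Is i \<subseteq> {..<M}"
      "\<forall>i<k. e \<le> \<bar>isum x (Is i)\<bar>" "\<forall>i<k. \<forall>j<k. i \<noteq> j \<longrightarrow> Is i \<inter> Is j = {}" by blast
    obtain m n where mn: "m \<ge> max M 1" "e \<le> \<bar>sum x {m..<n}\<bar>" using e(2) by blast
    have "m < n"
    proof (rule ccontr)
      assume "\<not> m < n" then have "sum x {m..<n} = 0" by simp
      then show False using mn e by simp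
    qed
    define Is' where "Is' = Is(k := {m..<n})"
    show ?case
    proof (intro exI[of _ Is'] exI[of _ "max M n"] conjI allI impI)
      fix i assume "i < Suc k"
      then show "Is' i = {} \<or> interval (Is' i)" using IH(1) interval_upto[of m n] mn \<open>m < n\<close>
        by (cases "i = k") (auto simp: Is'_def)
      show "Is' i \<subseteq> {..<max M n}"
      proof (cases "i = k")
        case True then show ?thesis by (auto simp: Is'_def)
      next
        case False then have "i < k" using \<open>i < Suc k\<close> by simp
        then have "Is i \<subseteq> {..<M}" using IH(2) by blast
        then show ?thesis using False by (auto simp: Is'_def)
      qed
      show "e \<le> \<bar>isum x (Is' i)\<bar>" using IH(3) \<open>i < Suc k\<close> mn
        by (cases "i = k") (auto simp: Is'_def isum_def)
    next
      fix i j assume ij: "i < Suc k" "j < Suc k" "i \<noteq> j"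
      have d: "Is i \<inter> {m..<n} = {}" if "i < k" for i
        using IH(2) that mn by fastforce
      have "i < k \<or> i = k" "j < k \<or> j = k" using ij by auto
      then show "Is' i \<inter> Is' j = {}"
      proof (elim disjE)
        assume "i < k" "j < k" then show ?thesis using IH(4) ij by (simp add: Is'_def)
      next
        assume "i < k" "j = k" then show ?thesis using d[of i] by (simp add: Is'_def)
      next
        assume "i = k" "j < k" then show ?thesis using d[of j] by (auto simp: Is'_def)
      next
        assume "i = k" "j = k" then show ?thesis using ij by simp
      qed
    qed
  qed
  obtain k :: nat where k: "(jnorm x)\<^sup>2 / e\<^sup>2 < real k" using reals_Archimedean2 by blast
  obtain Is where IsM: "\<forall>i<k. Is i = {} \<or> interval (Is i)"
     "\<forall>i<k. e \<le> \<bar>isum x (Is i)\<bar>" "\<forall>i<k. \<forall>j<k. i \<noteq> j \<longrightarrow> Is i \<inter> Is j = {}"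
    using fam[of k] by blast
  have "(\<Sum>i<k. (isum x (Is i))\<^sup>2) \<le> (jnorm x)\<^sup>2"
    by (rule JB[OF J]) (use IsM in auto)
  moreover have "(\<Sum>i<k. e\<^sup>2) \<le> (\<Sum>i<k. (isum x (Is i))\<^sup>2)"
  proof (rule sum_mono)
    fix i assume "i \<in> {..<k}"
    then have "e \<le> \<bar>isum x (Is i)\<bar>" using IsM by auto
    then have "e\<^sup>2 \<le> \<bar>isum x (Is i)\<bar>\<^sup>2" using e(1) by (intro power_mono) auto
    then show "e\<^sup>2 \<le> (isum x (Is i))\<^sup>2" by simp
  qed
  ultimately have "real k * e\<^sup>2 \<le> (jnorm x)\<^sup>2" by simp
  moreover have "(jnorm x)\<^sup>2 < real k * e\<^sup>2" using k e(1) by (simp add: divide_less_eq)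
  ultimately show False by simp
qed

lemma lo_least: "n \<in> (A::nat set) \<Longrightarrow> (LEAST m. m \<in> A) \<le> n" by (rule Least_le)
lemma lo_in: "A \<noteq> {} \<Longrightarrow> (LEAST m. m \<in> (A::nat set)) \<in> A" by (metis LeastI_ex ex_in_conv)

lemma interval_inf_eq: assumes "interval K" "infinite K" shows "K = {(LEAST m. m \<in> K)..}"
proof
  have ne: "K \<noteq> {}" using interval_ne[OF assms(1)] .
  show "K \<subseteq> {(LEAST m. m \<in> K)..}"
  proof
    fix b assume "b \<in> K"
    then show "b \<in> {(LEAST m. m \<in> K)..}" using Least_le[of "\<lambda>m. m \<in> K" b] by simp
  qed
  show "{(LEAST m. m \<in> K)..} \<subseteq> K"
  proof
    fix b assume "b \<in> {(LEAST m. m \<in> K)..}"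
    then show "b \<in> K" by (intro interval_inf_up[OF assms lo_in[OF ne]]) simp
  qed
qed

lemma summable_ind: assumes J: "in_J x" and K: "interval K \<or> finite K" shows "summable (ind x K)"
proof (cases "finite K")
  case True
  have "ind x K n = 0" if "n \<notin> K" for n using that by (simp add: ind_def)
  then show ?thesis using summable_finite[OF True] by blast
next
  case False
  then have iv: "interval K" using K by auto
  define l where "l = (LEAST m. m \<in> K)"
  have KK: "K = {l..}" using interval_inf_eq[OF iv False] l_def by simp
  have eq: "ind x K = (\<lambda>k. x k - (if k < l then x k else 0))"
  proof
    fix k show "ind x K k = x k - (if k < l then x k else 0)"
      unfolding ind_def by (subst KK) simp
  qed
  have s1: "summable x" by (rule summable_x[OF J])
  have s2: "summable (\<lambda>k. if k < l then x k else 0)"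
  proof -
    have "(if k < l then x k else 0) = 0" if "k \<notin> {..<l}" for k using that by simp
    then show ?thesis using summable_finite[of "{..<l}" "\<lambda>k. if k < l then x k else 0"] by blast
  qed
  show ?thesis unfolding eq by (rule summable_diff[OF s1 s2])
qed

lemma isum_eq: assumes "interval K \<or> finite K" shows "isum x K = suminf (ind x K)"
proof (cases "finite K")
  case True
  have "suminf (ind x K) = sum (ind x K) K" by (rule suminf_finite[OF True]) (auto simp: ind_def)
  also have "\<dots> = sum x K" by (auto simp: ind_def intro: sum.cong)
  finally show ?thesis using True by (simp add: isum_def)
next
  case False then show ?thesis by (simp add: isum_def ind_def)
qed

lemma isum_union:
  assumes J: "in_J x" and U: "interval U \<or> finite U" and V: "interval V \<or> finite V"
    and UV: "interval (U \<union> V) \<or> finite (U \<union> V)" and d: "U \<inter> V = {}"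
  shows "isum x (U \<union> V) = isum x U + isum x V"
proof -
  have "ind x (U \<union> V) = (\<lambda>k. ind x U k + ind x V k)" using d by (auto simp: ind_def fun_eq_iff)
  then have "suminf (ind x (U \<union> V)) = suminf (ind x U) + suminf (ind x V)"
    using suminf_add[OF summable_ind[OF J U] summable_ind[OF J V]] by simp
  then show ?thesis using isum_eq[OF U] isum_eq[OF V] isum_eq[OF UV] by simp
qed

lemma ind_supp: "K \<subseteq> {1..} \<Longrightarrow> ind x (K \<inter> supp x) = ind x K"
  by (auto simp: ind_def supp_def fun_eq_iff)

lemma isum_supp: assumes "interval K" "interval K'" "K \<inter> supp x = K' \<inter> supp x"
  shows "isum x K = isum x K'"
proof -
  have "ind x K = ind x K'" using ind_supp[of K x] ind_supp[of K' x] assms unfolding interval_def by metis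
  then show ?thesis using isum_eq[of K x] isum_eq[of K' x] assms by simp
qed

lemma isum_single: assumes "finite U" "U \<inter> supp x \<subseteq> {u}" "u \<in> U" "U \<subseteq> {1..}"
  shows "isum x U = x u"
proof -
  have "isum x U = sum x U" using assms by (simp add: isum_def)
  also have "\<dots> = sum x {u}"
    by (rule sum.mono_neutral_right) (use assms in \<open>auto simp: supp_def\<close>)
  finally show ?thesis by simp
qed



definition P :: "(nat \<Rightarrow> real) \<Rightarrow> nat set \<Rightarrow> (nat \<Rightarrow> nat set) \<Rightarrow> nat \<Rightarrow> real" where
  "P x F I m = (\<Sum>i\<in>F \<inter> {..m}. (isum x (I i))\<^sup>2)"

lemma fam_F: "interval_family F I \<Longrightarrow> (\<exists>k. F = {1..k}) \<or> F = {1..}"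
  unfolding interval_family_def by blast

lemma fam_iv: "interval_family F I \<Longrightarrow> i \<in> F \<Longrightarrow> interval (I i)"
  unfolding interval_family_def by blast

lemma fam_conv: assumes "interval_family F I" "i \<in> F" "k \<in> F" "i \<le> j" "j \<le> k" shows "j \<in> F"
  using fam_F[OF assms(1)] assms(2-5) by auto

lemma fam_ge1: assumes "interval_family F I" "i \<in> F" shows "1 \<le> i"
  using fam_F[OF assms(1)] assms(2) by auto

lemma FORD: assumes fam: "interval_family F I" and i: "i \<in> F" and j: "j \<in> F" "i < j"
  and a: "a \<in> I i" and b: "b \<in> I j" shows "a < b"
  using j b
proof (induction j arbitrary: b)
  case 0 then show ?case by simp
next
  case (Suc j)
  show ?case
  proof (cases "i = j")
    case True
    then show ?thesis using fam i Suc.prems a unfolding interval_family_def by blast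
  next
    case False
    then have ij: "i < j" using Suc.prems by simp
    have jF: "j \<in> F" using fam_conv[OF fam i Suc.prems(1), of j] ij by simp
    obtain c where c: "c \<in> I j" using interval_ne[OF fam_iv[OF fam jF]] by blast
    have "a < c" using Suc.IH[OF jF ij c] .
    moreover have "c < b" using fam jF Suc.prems c unfolding interval_family_def by blast
    ultimately show ?thesis by simp
  qed
qed

lemma FDISJ: assumes fam: "interval_family F I" "i \<in> F" "j \<in> F" "i \<noteq> j" shows "I i \<inter> I j = {}"
proof (rule ccontr)
  assume "I i \<inter> I j \<noteq> {}"
  then obtain a where a: "a \<in> I i" "a \<in> I j" by blast
  show False
  proof (cases "i < j")
    case True then show False using FORD[OF fam(1,2,3) True a(1) a(2)] by simp
  next
    case False then have "j < i" using assms(4) by simp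
    then show False using FORD[OF fam(1,3,2) _ a(2) a(1)] by simp
  qed
qed

lemma P_bound: assumes J: "in_J x" and fam: "interval_family F I" shows "P x F I m \<le> (jnorm x)\<^sup>2"
  unfolding P_def
proof (rule JB[OF J])
  show "finite (F \<inter> {..m})" by simp
  show "\<forall>s\<in>F \<inter> {..m}. I s = {} \<or> interval (I s)" using fam_iv[OF fam] by blast
  show "\<forall>s\<in>F \<inter> {..m}. \<forall>t\<in>F \<inter> {..m}. s \<noteq> t \<longrightarrow> I s \<inter> I t = {}" using FDISJ[OF fam] by blast
qed

lemma PLIM: assumes J: "in_J x" and N: "norming_family x F I" shows "P x F I \<longlonglongrightarrow> (jnorm x)\<^sup>2"
proof -
  have fam: "interval_family F I" and nrm: "fam_norm x F I = jnorm x" using N unfolding norming_family_def by auto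
  have jn: "0 \<le> jnorm x" by (rule jnorm_nonneg[OF J])
  show ?thesis
  proof (cases "finite F")
    case True
    have "F \<noteq> {1..}"
    proof
      assume "F = {1..}" then have "Suc (Max F) \<in> F" by simp
      then show False using Max_ge[OF True, of "Suc (Max F)"] by simp
    qed
    then obtain k where k: "F = {1..k}" using fam_F[OF fam] by blast
    have nn: "0 \<le> (\<Sum>i\<in>F. \<bar>isum x (I i)\<bar>^2)" by (meson sum_nonneg zero_le_power2)
    have "sqrt (\<Sum>i\<in>F. \<bar>isum x (I i)\<bar>^2) = jnorm x" using nrm True unfolding fam_norm_def by simp
    then have "(\<Sum>i\<in>F. \<bar>isum x (I i)\<bar>^2) = (jnorm x)\<^sup>2" using real_sqrt_pow2[OF nn] by simp
    then have eqs: "(\<Sum>i\<in>F. (isum x (I i))\<^sup>2) = (jnorm x)\<^sup>2" by (simp only: power2_abs)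
    have "\<forall>m\<ge>k. P x F I m = (jnorm x)\<^sup>2"
    proof (intro allI impI)
      fix m assume "k \<le> m"
      then have "F \<inter> {..m} = F" using k by auto
      then show "P x F I m = (jnorm x)\<^sup>2" using eqs by (simp add: P_def)
    qed
    then have "eventually (\<lambda>m. P x F I m = (jnorm x)\<^sup>2) sequentially"
      unfolding eventually_sequentially by blast
    then show ?thesis by (rule tendsto_eventually)
  next
    case False
    define f where "f i = (if i \<in> F then (isum x (I i))\<^sup>2 else 0)" for i
    have Pf: "P x F I m = (\<Sum>i\<le>m. f i)" for m
    proof -
      have "F \<inter> {..m} = {..m} \<inter> F" by blast
      then have "P x F I m = (\<Sum>i\<in>{..m} \<inter> F. (isum x (I i))\<^sup>2)" by (simp add: P_def)
      also have "\<dots> = (\<Sum>i\<le>m. f i)" unfolding f_def by (rule sum.inter_restrict) simp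
      finally show ?thesis .
    qed
    have f0: "0 \<le> f i" for i by (simp add: f_def)
    have sf: "summable f"
      by (rule bounded_imp_summable[OF f0, where B="(jnorm x)\<^sup>2"]) (use P_bound[OF J fam] Pf in metis)
    have ff: "(\<lambda>i. if i \<in> F then \<bar>isum x (I i)\<bar>^2 else 0) = f" by (rule ext) (simp add: f_def)
    have "sqrt (suminf f) = jnorm x" using nrm False unfolding fam_norm_def ff by simp
    moreover have "0 \<le> suminf f" using suminf_nonneg[OF sf f0] .
    ultimately have "suminf f = (jnorm x)\<^sup>2" by (metis real_sqrt_pow2)
    moreover have "(\<lambda>m. \<Sum>i\<le>m. f i) \<longlonglongrightarrow> suminf f" by (rule summable_LIMSEQ'[OF sf])
    ultimately show ?thesis unfolding Pf[abs_def] by simp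
  qed
qed

lemma LLIM: assumes J: "in_J x" and N: "norming_family x F I"
  and ev: "\<exists>M. \<forall>m\<ge>M. P x F I m + c \<le> (jnorm x)\<^sup>2" shows "c \<le> 0"
proof -
  have "(\<lambda>m. P x F I m + c) \<longlonglongrightarrow> (jnorm x)\<^sup>2 + c" by (intro tendsto_add PLIM[OF J N] tendsto_const)
  then have "(jnorm x)\<^sup>2 + c \<le> (jnorm x)\<^sup>2" using ev by (rule LIMSEQ_le_const2)
  then show ?thesis by simp
qed

lemma LLIM2: assumes J: "in_J x" and N: "norming_family x F I" and N2: "norming_family x G L"
  and ev: "\<exists>M. \<forall>m\<ge>M. P x F I m + P x G L m + c \<le> 2 * (jnorm x)\<^sup>2" shows "c \<le> 0"
proof -
  have "(\<lambda>m. P x F I m + P x G L m + c) \<longlonglongrightarrow> (jnorm x)\<^sup>2 + (jnorm x)\<^sup>2 + c"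
    by (intro tendsto_add PLIM[OF J N] PLIM[OF J N2] tendsto_const)
  then have "(jnorm x)\<^sup>2 + (jnorm x)\<^sup>2 + c \<le> 2 * (jnorm x)\<^sup>2" using ev by (rule LIMSEQ_le_const2)
  then show ?thesis by simp
qed


lemma LOL:
  fixes n :: nat and E :: "nat \<Rightarrow> nat set"
  assumes J: "in_J x" and N: "norming_family x F I" and R: "finite R" "R \<subseteq> F"
    and Eiv: "\<forall>k<n. interval (E k)" and Ed: "\<forall>k<n. \<forall>k'<n. k \<noteq> k' \<longrightarrow> E k \<inter> E k' = {}"
    and EI: "\<forall>k<n. \<forall>i\<in>F - R. E k \<inter> I i = {}"
  shows "(\<Sum>k<n. (isum x (E k))\<^sup>2) \<le> (\<Sum>i\<in>R. (isum x (I i))\<^sup>2)"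
proof -
  have fam: "interval_family F I" using N unfolding norming_family_def by auto
  define M where "M = (if R = {} then 0 else Max R)"
  have RM: "R \<subseteq> {..m}" if "M \<le> m" for m
  proof
    fix r assume "r \<in> R"
    then have "r \<le> Max R" "R \<noteq> {}" using Max_ge[OF R(1)] by auto
    then show "r \<in> {..m}" using that M_def by simp
  qed
  have "\<forall>m\<ge>M. P x F I m + ((\<Sum>k<n. (isum x (E k))\<^sup>2) - (\<Sum>i\<in>R. (isum x (I i))\<^sup>2)) \<le> (jnorm x)\<^sup>2"
  proof (intro allI impI)
    fix m assume "M \<le> m"
    define A where "A = F \<inter> {..m} - R"
    define K where "K = case_sum I E"
    have fA: "finite A" using A_def by simp
    have "(\<Sum>s\<in>A <+> {..<n}. (isum x (K s))\<^sup>2) \<le> (jnorm x)\<^sup>2"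
    proof (rule JB[OF J])
      show "finite (A <+> {..<n})" using fA by simp
      show "\<forall>s\<in>A <+> {..<n}. K s = {} \<or> interval (K s)"
        using fam_iv[OF fam] Eiv unfolding A_def K_def by auto
      show "\<forall>s\<in>A <+> {..<n}. \<forall>t\<in>A <+> {..<n}. s \<noteq> t \<longrightarrow> K s \<inter> K t = {}"
      proof (intro ballI impI)
        fix s t assume st: "s \<in> A <+> {..<n}" "t \<in> A <+> {..<n}" "s \<noteq> t"
        show "K s \<inter> K t = {}"
        proof (cases s)
          case (Inl i)
          note si = Inl
          show ?thesis
          proof (cases t)
            case (Inl i')
            then show ?thesis using si st FDISJ[OF fam, of i i'] unfolding A_def K_def by auto
          next
            case (Inr k)
            then show ?thesis using si st EI unfolding A_def K_def by auto
          qed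
        next
          case (Inr k)
          note sk = Inr
          show ?thesis
          proof (cases t)
            case (Inl i')
            then show ?thesis using sk st EI unfolding A_def K_def by auto
          next
            case (Inr k')
            then show ?thesis using sk st Ed unfolding K_def by auto
          qed
        qed
      qed
    qed
    moreover have "(\<Sum>s\<in>A <+> {..<n}. (isum x (K s))\<^sup>2) = (\<Sum>i\<in>A. (isum x (I i))\<^sup>2) + (\<Sum>k<n. (isum x (E k))\<^sup>2)"
      by (subst sum.Plus[OF fA]) (auto simp: K_def)
    moreover have "(\<Sum>i\<in>A. (isum x (I i))\<^sup>2) = P x F I m - (\<Sum>i\<in>R. (isum x (I i))\<^sup>2)"
      unfolding A_def P_def by (rule sum_diff) (use RM[OF \<open>M \<le> m\<close>] R(2) in auto)
    ultimately show "P x F I m + ((\<Sum>k<n. (isum x (E k))\<^sup>2) - (\<Sum>i\<in>R. (isum x (I i))\<^sup>2)) \<le> (jnorm x)\<^sup>2"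
      by simp
  qed
  then have "(\<Sum>k<n. (isum x (E k))\<^sup>2) - (\<Sum>i\<in>R. (isum x (I i))\<^sup>2) \<le> 0"
    by (intro LLIM[OF J N]) blast
  then show ?thesis by simp
qed

lemma COVER: assumes J: "in_J x" and N: "norming_family x F I" and n: "n \<in> supp x"
  shows "\<exists>i\<in>F. n \<in> I i"
proof (rule ccontr)
  assume nc: "\<not> (\<exists>i\<in>F. n \<in> I i)"
  have n1: "1 \<le> n" "x n \<noteq> 0" using n by (auto simp: supp_def)
  have "(\<Sum>k<Suc 0. (isum x ((\<lambda>_. {n}) k))\<^sup>2) \<le> (\<Sum>i\<in>{}. (isum x (I i))\<^sup>2)"
    by (rule LOL[OF J N]) (use nc n1 in \<open>auto simp: interval_def\<close>)
  then have "(x n)\<^sup>2 \<le> 0" by (simp add: isum_def)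
  then show False using n1 by simp
qed


lemma NZ:
  assumes J: "in_J x" and N: "norming_family x F I" and i: "i \<in> F"
    and UV: "I i = U \<union> V" and d: "U \<inter> V = {}" and U: "interval U" and V: "interval V"
    and u: "u \<in> U" "u \<in> supp x"
  shows "isum x U \<noteq> 0"
proof
  assume z: "isum x U = 0"
  have fam: "interval_family F I" using N unfolding norming_family_def by auto
  have Ii: "interval (I i)" using fam_iv[OF fam i] .
  define u0 where "u0 = (LEAST n. n \<in> U \<inter> supp x)"
  have u0: "u0 \<in> U" "u0 \<in> supp x" using lo_in[of "U \<inter> supp x"] u unfolding u0_def by auto
  have u0le: "u0 \<le> n" if "n \<in> U \<inter> supp x" for n using lo_least[OF that] unfolding u0_def .
  define U1 where "U1 = {n\<in>U. n \<le> u0}"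
  define U2 where "U2 = {n\<in>U. u0 < n}"
  have UU: "U = U1 \<union> U2" and d12: "U1 \<inter> U2 = {}" unfolding U1_def U2_def by auto
  have fU1: "finite U1" unfolding U1_def by (rule finite_subset[of _ "{..u0}"]) auto
  have U1s: "U1 \<inter> supp x \<subseteq> {u0}" using u0le unfolding U1_def by force
  have U1_1: "U1 \<subseteq> {1..}" using U unfolding U1_def interval_def by auto
  have u0U1: "u0 \<in> U1" using u0 unfolding U1_def by simp
  have xu0: "isum x U1 = x u0" by (rule isum_single[OF fU1 U1s u0U1 U1_1])
  have xne: "x u0 \<noteq> 0" using u0 by (simp add: supp_def)
  have iU1: "interval U1"
    unfolding interval_def
  proof (intro conjI allI impI)
    show "U1 \<noteq> {}" using u0U1 by blast
    show "U1 \<subseteq> {1..}" by (rule U1_1)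
    fix a b c assume "a \<in> U1" "c \<in> U1" "a \<le> b" "b \<le> c"
    then show "b \<in> U1" using interval_conv[OF U, of a c b] unfolding U1_def by auto
  qed
  show False
  proof (cases "U2 = {}")
    case True
    then have "U = U1" using UU by simp
    then show False using z xu0 xne by simp
  next
    case False
    have iU2: "interval U2"
      unfolding interval_def
    proof (intro conjI allI impI)
      show "U2 \<noteq> {}" by (rule False)
      show "U2 \<subseteq> {1..}" using U unfolding U2_def interval_def by auto
      fix a b c assume "a \<in> U2" "c \<in> U2" "a \<le> b" "b \<le> c"
      then show "b \<in> U2" using interval_conv[OF U, of a c b] unfolding U2_def by auto
    qed
    have sU: "isum x U = isum x U1 + isum x U2"
      using isum_union[OF J, of U1 U2] iU1 iU2 U UU d12 by simp
    have sI: "isum x (I i) = isum x U + isum x V"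
      using isum_union[OF J, of U V] U V Ii UV d by simp
    define E where "E k = (if k = 0 then U1 else if k = 1 then U2 else V)" for k :: nat
    have "(\<Sum>k<3. (isum x (E k))\<^sup>2) \<le> (\<Sum>i'\<in>{i}. (isum x (I i'))\<^sup>2)"
    proof (rule LOL[OF J N])
      show "finite {i}" "{i} \<subseteq> F" using i by auto
      show "\<forall>k<3. interval (E k)" using iU1 iU2 V unfolding E_def by auto
      show "\<forall>k<3. \<forall>k'<3. k \<noteq> k' \<longrightarrow> E k \<inter> E k' = {}"
        using d12 d UU unfolding E_def by auto
      have sub: "E k \<subseteq> I i" for k using UU UV unfolding E_def by auto
      show "\<forall>k<3. \<forall>i'\<in>F - {i}. E k \<inter> I i' = {}"
        using sub FDISJ[OF fam i] by blast
    qed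
    moreover have U2v: "isum x U2 = - x u0" using sU z xu0 by simp
    ultimately have "(x u0)\<^sup>2 + (x u0)\<^sup>2 + (isum x V)\<^sup>2 \<le> (isum x V)\<^sup>2"
      using sI z xu0 by (simp add: E_def eval_nat_numeral)
    then have "(x u0)\<^sup>2 \<le> 0" by linarith
    then show False using xne by simp
  qed
qed

lemma P_split: assumes "i \<in> F" "i \<le> m"
  shows "P x F I m = (\<Sum>i'\<in>F \<inter> {..<i}. (isum x (I i'))\<^sup>2) + (isum x (I i))\<^sup>2 + (\<Sum>i'\<in>F \<inter> {i<..m}. (isum x (I i'))\<^sup>2)"
proof -
  have eq: "F \<inter> {..m} = (F \<inter> {..<i}) \<union> insert i (F \<inter> {i<..m})" using assms by auto
  have "P x F I m = (\<Sum>i'\<in>F \<inter> {..<i}. (isum x (I i'))\<^sup>2) + (\<Sum>i'\<in>insert i (F \<inter> {i<..m}). (isum x (I i'))\<^sup>2)"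
    unfolding P_def eq by (rule sum.union_disjoint) auto
  then show ?thesis by simp
qed

lemma sum_upd: fixes i :: nat and F :: "nat set" assumes "i \<in> F"
  shows "(\<Sum>i'\<in>F \<inter> {..i}. (isum x (if i' = i then X else I i'))\<^sup>2) = (\<Sum>i'\<in>F \<inter> {..<i}. (isum x (I i'))\<^sup>2) + (isum x X)\<^sup>2"
proof -
  have "F \<inter> {..i} = insert i (F \<inter> {..<i})" using assms by auto
  then have "(\<Sum>i'\<in>F \<inter> {..i}. (isum x (if i' = i then X else I i'))\<^sup>2) = (isum x X)\<^sup>2 + (\<Sum>i'\<in>F \<inter> {..<i}. (isum x (if i' = i then X else I i'))\<^sup>2)"
    by simp
  also have "(\<Sum>i'\<in>F \<inter> {..<i}. (isum x (if i' = i then X else I i'))\<^sup>2) = (\<Sum>i'\<in>F \<inter> {..<i}. (isum x (I i'))\<^sup>2)"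
    by (rule sum.cong) auto
  finally show ?thesis by simp
qed


lemma TFE:
  assumes J: "in_J x" and N1: "norming_family x F I" and N2: "norming_family x G L"
    and i: "i \<in> F" and j: "j \<in> G" and X: "interval X" and Y: "interval Y"
    and h1: "\<forall>i'\<in>F. i' < i \<longrightarrow> I i' \<inter> X = {}"
    and h2: "\<forall>j'\<in>G. j < j' \<longrightarrow> L j' \<inter> X = {}"
    and h3: "\<forall>i'\<in>F. \<forall>j'\<in>G. i' < i \<longrightarrow> j < j' \<longrightarrow> I i' \<inter> L j' = {}"
    and h4: "\<forall>j'\<in>G. j' < j \<longrightarrow> L j' \<inter> Y = {}"
    and h5: "\<forall>i'\<in>F. i < i' \<longrightarrow> I i' \<inter> Y = {}"
    and h6: "\<forall>i'\<in>F. \<forall>j'\<in>G. i < i' \<longrightarrow> j' < j \<longrightarrow> I i' \<inter> L j' = {}"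
  shows "(isum x X)\<^sup>2 + (isum x Y)\<^sup>2 \<le> (isum x (I i))\<^sup>2 + (isum x (L j))\<^sup>2"
proof -
  have fam1: "interval_family F I" using N1 unfolding norming_family_def by auto
  have fam2: "interval_family G L" using N2 unfolding norming_family_def by auto
  have "\<forall>m\<ge>max i j. P x F I m + P x G L m + ((isum x X)\<^sup>2 + (isum x Y)\<^sup>2 - (isum x (I i))\<^sup>2 - (isum x (L j))\<^sup>2) \<le> 2 * (jnorm x)\<^sup>2"
  proof (intro allI impI)
    fix m assume m: "max i j \<le> m"
    define A1 where "A1 = F \<inter> {..i}"
    define B1 where "B1 = G \<inter> {j<..m}"
    define K1 where "K1 = case_sum (\<lambda>i'. if i' = i then X else I i') L"
    define A2 where "A2 = F \<inter> {i<..m}"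
    define B2 where "B2 = G \<inter> {..j}"
    define K2 where "K2 = case_sum I (\<lambda>j'. if j' = j then Y else L j')"
    have v1: "(\<Sum>s\<in>A1 <+> B1. (isum x (K1 s))\<^sup>2) \<le> (jnorm x)\<^sup>2"
    proof (rule JB[OF J])
      show "finite (A1 <+> B1)" unfolding A1_def B1_def by simp
      show "\<forall>s\<in>A1 <+> B1. K1 s = {} \<or> interval (K1 s)"
        using fam_iv[OF fam1] fam_iv[OF fam2] X unfolding A1_def B1_def K1_def by (auto split: if_splits)
      show "\<forall>s\<in>A1 <+> B1. \<forall>t\<in>A1 <+> B1. s \<noteq> t \<longrightarrow> K1 s \<inter> K1 t = {}"
      proof (intro ballI impI)
        fix s t assume st: "s \<in> A1 <+> B1" "t \<in> A1 <+> B1" "s \<noteq> t"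
        show "K1 s \<inter> K1 t = {}"
        proof (cases s)
          case (Inl a)
          note sa = Inl
          show ?thesis
          proof (cases t)
            case (Inl b)
            then have ab: "a \<in> F" "b \<in> F" "a \<le> i" "b \<le> i" "a \<noteq> b" using sa st unfolding A1_def by auto
            show ?thesis
            proof (cases "a = i")
              case True then show ?thesis using ab h1 sa Inl unfolding K1_def by auto
            next
              case False
              show ?thesis
              proof (cases "b = i")
                case True then show ?thesis using ab h1 sa Inl False unfolding K1_def by auto
              next
                case False2: False
                then show ?thesis using ab sa Inl False FDISJ[OF fam1, of a b] unfolding K1_def by auto
              qed
            qed
          next
            case (Inr b)
            then have ab: "a \<in> F" "b \<in> G" "a \<le> i" "j < b" using sa st unfolding A1_def B1_def by auto
            show ?thesis
            proof (cases "a = i")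
              case True then show ?thesis using ab h2 sa Inr unfolding K1_def by auto
            next
              case False then show ?thesis using ab h3 sa Inr unfolding K1_def by auto
            qed
          qed
        next
          case (Inr a)
          note sa = Inr
          show ?thesis
          proof (cases t)
            case (Inl b)
            then have ab: "b \<in> F" "a \<in> G" "b \<le> i" "j < a" using sa st unfolding A1_def B1_def by auto
            show ?thesis
            proof (cases "b = i")
              case True then show ?thesis using ab h2 sa Inl unfolding K1_def by auto
            next
              case False then have "b < i" using ab by simp
              then show ?thesis using ab h3 sa Inl unfolding K1_def by auto
            qed
          next
            case (Inr b)
            then show ?thesis using sa st FDISJ[OF fam2, of a b] unfolding B1_def K1_def by auto
          qed
        qed
      qed
    qed
    have v2: "(\<Sum>s\<in>A2 <+> B2. (isum x (K2 s))\<^sup>2) \<le> (jnorm x)\<^sup>2"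
    proof (rule JB[OF J])
      show "finite (A2 <+> B2)" unfolding A2_def B2_def by simp
      show "\<forall>s\<in>A2 <+> B2. K2 s = {} \<or> interval (K2 s)"
        using fam_iv[OF fam1] fam_iv[OF fam2] Y unfolding A2_def B2_def K2_def by (auto split: if_splits)
      show "\<forall>s\<in>A2 <+> B2. \<forall>t\<in>A2 <+> B2. s \<noteq> t \<longrightarrow> K2 s \<inter> K2 t = {}"
      proof (intro ballI impI)
        fix s t assume st: "s \<in> A2 <+> B2" "t \<in> A2 <+> B2" "s \<noteq> t"
        show "K2 s \<inter> K2 t = {}"
        proof (cases s)
          case (Inl a)
          note sa = Inl
          show ?thesis
          proof (cases t)
            case (Inl b)
            then show ?thesis using sa st FDISJ[OF fam1, of a b] unfolding A2_def K2_def by auto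
          next
            case (Inr b)
            then have ab: "a \<in> F" "b \<in> G" "i < a" "b \<le> j" using sa st unfolding A2_def B2_def by auto
            show ?thesis
            proof (cases "b = j")
              case True then show ?thesis using ab h5 sa Inr unfolding K2_def by auto
            next
              case False then show ?thesis using ab h6 sa Inr unfolding K2_def by auto
            qed
          qed
        next
          case (Inr a)
          note sa = Inr
          show ?thesis
          proof (cases t)
            case (Inl b)
            then have ab: "b \<in> F" "a \<in> G" "i < b" "a \<le> j" using sa st unfolding A2_def B2_def by auto
            show ?thesis
            proof (cases "a = j")
              case True then show ?thesis using ab h5 sa Inl unfolding K2_def by auto
            next
              case False then have "a < j" using ab by simp
              then show ?thesis using ab h6 sa Inl unfolding K2_def by auto
            qed
          next
            case (Inr b)
            then have ab: "a \<in> G" "b \<in> G" "a \<le> j" "b \<le> j" "a \<noteq> b" using sa st unfolding B2_def by auto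
            show ?thesis
            proof (cases "a = j")
              case True then show ?thesis using ab h4 sa Inr unfolding K2_def by auto
            next
              case False
              show ?thesis
              proof (cases "b = j")
                case True then show ?thesis using ab h4 sa Inr False unfolding K2_def by auto
              next
                case False2: False
                then show ?thesis using ab sa Inr False FDISJ[OF fam2, of a b] unfolding K2_def by auto
              qed
            qed
          qed
        qed
      qed
    qed
    have e1: "(\<Sum>s\<in>A1 <+> B1. (isum x (K1 s))\<^sup>2) = (\<Sum>i'\<in>F \<inter> {..<i}. (isum x (I i'))\<^sup>2) + (isum x X)\<^sup>2 + (\<Sum>j'\<in>G \<inter> {j<..m}. (isum x (L j'))\<^sup>2)"
    proof -
      have "(\<Sum>s\<in>A1 <+> B1. (isum x (K1 s))\<^sup>2) = (\<Sum>i'\<in>A1. (isum x (if i' = i then X else I i'))\<^sup>2) + (\<Sum>j'\<in>B1. (isum x (L j'))\<^sup>2)"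
        by (subst sum.Plus) (auto simp: A1_def B1_def K1_def)
      then show ?thesis using sum_upd[OF i, of x X I] unfolding A1_def B1_def by simp
    qed
    have e2: "(\<Sum>s\<in>A2 <+> B2. (isum x (K2 s))\<^sup>2) = (\<Sum>i'\<in>F \<inter> {i<..m}. (isum x (I i'))\<^sup>2) + ((\<Sum>j'\<in>G \<inter> {..<j}. (isum x (L j'))\<^sup>2) + (isum x Y)\<^sup>2)"
    proof -
      have "(\<Sum>s\<in>A2 <+> B2. (isum x (K2 s))\<^sup>2) = (\<Sum>i'\<in>A2. (isum x (I i'))\<^sup>2) + (\<Sum>j'\<in>B2. (isum x (if j' = j then Y else L j'))\<^sup>2)"
        by (subst sum.Plus) (auto simp: A2_def B2_def K2_def)
      then show ?thesis using sum_upd[OF j, of x Y L] unfolding A2_def B2_def by simp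
    qed
    have p1: "P x F I m = (\<Sum>i'\<in>F \<inter> {..<i}. (isum x (I i'))\<^sup>2) + (isum x (I i))\<^sup>2 + (\<Sum>i'\<in>F \<inter> {i<..m}. (isum x (I i'))\<^sup>2)"
      by (rule P_split[OF i]) (use m in simp)
    have p2: "P x G L m = (\<Sum>j'\<in>G \<inter> {..<j}. (isum x (L j'))\<^sup>2) + (isum x (L j))\<^sup>2 + (\<Sum>j'\<in>G \<inter> {j<..m}. (isum x (L j'))\<^sup>2)"
      by (rule P_split[OF j]) (use m in simp)
    show "P x F I m + P x G L m + ((isum x X)\<^sup>2 + (isum x Y)\<^sup>2 - (isum x (I i))\<^sup>2 - (isum x (L j))\<^sup>2) \<le> 2 * (jnorm x)\<^sup>2"
      using v1 v2 e1 e2 p1 p2 by linarith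
  qed
  then have "(isum x X)\<^sup>2 + (isum x Y)\<^sup>2 - (isum x (I i))\<^sup>2 - (isum x (L j))\<^sup>2 \<le> 0"
    by (intro LLIM2[OF J N1 N2]) blast
  then show ?thesis by simp
qed



definition good :: "(nat \<Rightarrow> real) \<Rightarrow> nat set \<Rightarrow> bool" where
  "good x K \<longleftrightarrow> interval K \<and> (finite K \<longrightarrow> Min K \<in> supp x \<and> Max K \<in> supp x) \<and> (infinite K \<longrightarrow> infinite (supp x))"

lemma part_norm: "norming_partition x F I \<Longrightarrow> norming_family x F I"
  unfolding norming_partition_def by auto

lemma part_fam: "norming_partition x F I \<Longrightarrow> interval_family F I"
  unfolding norming_partition_def norming_family_def by auto

lemma supE_fin: "finite A \<Longrightarrow> supE A = enat (Max A)" by (simp add: supE_def)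
lemma supE_inf: "infinite A \<Longrightarrow> supE A = \<infinity>" by (simp add: supE_def)

lemma last_of: assumes p: "norming_partition x F I" and i: "i \<in> F" and nl: "\<not> enat i < supE F"
  shows "finite F" "i = Max F"
proof -
  show fF: "finite F"
  proof (rule ccontr)
    assume "infinite F" then have "supE F = \<infinity>" by (rule supE_inf)
    then show False using nl by simp
  qed
  have "i \<le> Max F" using Max_ge[OF fF i] .
  moreover have "\<not> i < Max F" using nl supE_fin[OF fF] by simp
  ultimately show "i = Max F" by simp
qed

lemma last_props: assumes p: "norming_partition x F I" and i: "i \<in> F" and nl: "\<not> enat i < supE F"
  shows "Min (I i) \<in> supp x" "supE (I i) = supE (supp x)"
  using p last_of[OF p i nl] i unfolding norming_partition_def by auto

lemma nonlast_props: assumes p: "norming_partition x F I" and i: "i \<in> F" and nl: "enat i < supE F"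
  shows "finite (I i)" "Min (I i) \<in> supp x" "Max (I i) \<in> supp x"
  using p i nl unfolding norming_partition_def by auto

lemma GOOD: assumes p: "norming_partition x F I" and i: "i \<in> F" shows "good x (I i)"
proof -
  have fam: "interval_family F I" using part_fam[OF p] .
  have iv: "interval (I i)" using fam_iv[OF fam i] .
  show ?thesis
  proof (cases "enat i < supE F")
    case True
    then show ?thesis using nonlast_props[OF p i True] iv unfolding good_def by auto
  next
    case False
    note lp = last_props[OF p i False]
    have a: "finite (I i) \<longrightarrow> Min (I i) \<in> supp x \<and> Max (I i) \<in> supp x"
    proof
      assume fI: "finite (I i)"
      have fs: "finite (supp x)"
      proof (rule ccontr)
        assume "infinite (supp x)" then have "supE (supp x) = \<infinity>" by (rule supE_inf)
        then show False using lp(2) supE_fin[OF fI] by simp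
      qed
      have "Max (supp x) = Max (I i)" using lp(2) supE_fin[OF fI] supE_fin[OF fs] by simp
      moreover have "supp x \<noteq> {}" using lp(1) by blast
      ultimately have "Max (I i) \<in> supp x" using Max_in[OF fs] by metis
      then show "Min (I i) \<in> supp x \<and> Max (I i) \<in> supp x" using lp(1) by simp
    qed
    have b: "infinite (I i) \<longrightarrow> infinite (supp x)"
    proof
      assume "infinite (I i)" then have "supE (I i) = \<infinity>" by (rule supE_inf)
      then have "supE (supp x) = \<infinity>" using lp(2) by simp
      then show "infinite (supp x)" using supE_fin by fastforce
    qed
    show ?thesis using iv a b unfolding good_def by blast
  qed
qed

lemma good_iv: "good x K \<Longrightarrow> interval K" unfolding good_def by simp

lemma good_supp_ne: assumes g: "good x K" shows "K \<inter> supp x \<noteq> {}"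
proof (cases "finite K")
  case True
  have "K \<noteq> {}" using interval_ne g unfolding good_def by blast
  then have "Min K \<in> K" using Min_in[OF True] by blast
  then show ?thesis using g True unfolding good_def by blast
next
  case False
  have ne: "K \<noteq> {}" using interval_ne g unfolding good_def by blast
  then obtain a where a: "a \<in> K" by blast
  have "infinite (supp x)" using g False unfolding good_def by blast
  then obtain s where s: "s \<in> supp x" "a \<le> s" unfolding infinite_nat_iff_unbounded_le by blast
  have "s \<in> K" by (rule interval_inf_up[OF good_iv[OF g] False a s(2)])
  then show ?thesis using s by blast
qed

lemma DS: assumes g: "good x K" and g': "good x K'" and n: "n \<in> K" "n \<in> K'"
  shows "K \<inter> K' \<inter> supp x \<noteq> {}"
proof -
  have iv: "interval K" "interval K'" using g g' good_iv by auto
  show ?thesis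
  proof (cases "finite K")
    case fK: True
    show ?thesis
    proof (cases "finite K'")
      case fK': True
      have mK: "Min K \<in> K" "Min K \<le> n" "Min K \<in> supp x" using fK n g Min_in Min_le unfolding good_def by auto
      have mK': "Min K' \<in> K'" "Min K' \<le> n" "Min K' \<in> supp x" using fK' n g' Min_in Min_le unfolding good_def by auto
      show ?thesis
      proof (cases "Min K \<le> Min K'")
        case True
        then have "Min K' \<in> K" using interval_conv[OF iv(1) mK(1) n(1)] mK'(2) by blast
        then show ?thesis using mK' by blast
      next
        case False
        then have "Min K \<in> K'" using interval_conv[OF iv(2) mK'(1) n(2)] mK(2) by simp
        then show ?thesis using mK by blast
      qed
    next
      case fK': False
      have mK: "Max K \<in> K" "n \<le> Max K" "Max K \<in> supp x" using fK n g Max_in Max_ge unfolding good_def by auto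
      have "Max K \<in> K'" by (rule interval_inf_up[OF iv(2) fK' n(2) mK(2)])
      then show ?thesis using mK by blast
    qed
  next
    case fK: False
    show ?thesis
    proof (cases "finite K'")
      case fK': True
      have mK': "Max K' \<in> K'" "n \<le> Max K'" "Max K' \<in> supp x" using fK' n g' Max_in Max_ge unfolding good_def by auto
      have "Max K' \<in> K" by (rule interval_inf_up[OF iv(1) fK n(1) mK'(2)])
      then show ?thesis using mK' by blast
    next
      case fK': False
      have "infinite (supp x)" using g fK unfolding good_def by blast
      then obtain s where s: "s \<in> supp x" "n \<le> s" unfolding infinite_nat_iff_unbounded_le by blast
      have "s \<in> K" by (rule interval_inf_up[OF iv(1) fK n(1) s(2)])
      moreover have "s \<in> K'" by (rule interval_inf_up[OF iv(2) fK' n(2) s(2)])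
      ultimately show ?thesis using s by blast
    qed
  qed
qed

lemma PL: assumes p: "norming_partition x F I" and i: "i \<in> F" and n: "n \<in> supp x" and lt: "\<forall>a\<in>I i. a < n"
  shows "enat i < supE F"
proof (rule ccontr)
  assume nl: "\<not> enat i < supE F"
  note lp = last_props[OF p i nl]
  have iv: "interval (I i)" using fam_iv[OF part_fam[OF p] i] .
  show False
  proof (cases "finite (I i)")
    case True
    have fs: "finite (supp x)"
    proof (rule ccontr)
      assume "infinite (supp x)" then have "supE (supp x) = \<infinity>" by (rule supE_inf)
      then show False using lp(2) supE_fin[OF True] by simp
    qed
    have "Max (supp x) = Max (I i)" using lp(2) supE_fin[OF True] supE_fin[OF fs] by simp
    moreover have "n \<le> Max (supp x)" using Max_ge[OF fs n] .
    moreover have "Max (I i) \<in> I i" using Max_in[OF True] interval_ne[OF iv] by blast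
    ultimately show False using lt by fastforce
  next
    case False
    then obtain a where "a \<in> I i" "n \<le> a" unfolding infinite_nat_iff_unbounded_le by blast
    then show False using lt by fastforce
  qed
qed

lemma next_in: assumes p: "norming_partition x F I" and i: "i \<in> F" and nl: "enat i < supE F"
  shows "Suc i \<in> F"
proof -
  have fam: "interval_family F I" using part_fam[OF p] .
  show ?thesis
  proof (cases "finite F")
    case True
    have "i < Max F" using nl supE_fin[OF True] by simp
    then show ?thesis using fam_conv[OF fam i Max_in[OF True], of "Suc i"] i by auto
  next
    case False
    then have "F = {1..}" using fam_F[OF fam] by auto
    then show ?thesis by simp
  qed
qed


lemma interval_icc: "1 \<le> l \<Longrightarrow> l \<le> b \<Longrightarrow> interval {l..b}"
  unfolding interval_def by auto

lemma arith_cross: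
  fixes A B C :: real
  assumes "A \<noteq> 0" "B \<noteq> 0" "C \<noteq> 0" "A\<^sup>2 + B\<^sup>2 \<le> (A + B)\<^sup>2" "B\<^sup>2 + C\<^sup>2 \<le> (B + C)\<^sup>2"
    "(A + B + C)\<^sup>2 + B\<^sup>2 \<le> (A + B)\<^sup>2 + (B + C)\<^sup>2"
  shows False
proof -
  have "0 \<le> A * B" using assms(4) by (simp add: power2_eq_square algebra_simps)
  then have ab: "0 < A * B" using assms(1,2) by (simp add: order_le_less)
  have "0 \<le> B * C" using assms(5) by (simp add: power2_eq_square algebra_simps)
  then have bc: "0 < B * C" using assms(2,3) by (simp add: order_le_less)
  have ac: "A * C \<le> 0" using assms(6) by (simp add: power2_eq_square algebra_simps)
  have "0 < (A * B) * (B * C)" using ab bc by (rule mult_pos_pos)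
  also have "(A * B) * (B * C) = (A * C) * (B * B)" by (simp add: algebra_simps)
  finally have "0 < (A * C) * (B * B)" .
  moreover have "0 < B\<^sup>2" using assms(2) by simp
  then have "0 < B * B" by (simp add: power2_eq_square)
  ultimately have "0 < A * C" by (simp add: zero_less_mult_iff)
  then show False using ac by simp
qed

lemma CROSS:
  assumes J: "in_J x" and p1: "norming_partition x F I" and p2: "norming_partition x G L"
    and i: "i \<in> F" and j: "j \<in> G"
    and u: "u \<in> I i" "u \<in> supp x" "u \<notin> L j"
    and v: "v \<in> L j" "v \<in> supp x" "v \<notin> I i"
    and w: "w \<in> I i" "w \<in> L j" "w \<in> supp x"
    and uv: "u < v"
  shows False
proof -
  have N1: "norming_family x F I" using part_norm[OF p1] .
  have N2: "norming_family x G L" using part_norm[OF p2] .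
  have fam1: "interval_family F I" using part_fam[OF p1] .
  have fam2: "interval_family G L" using part_fam[OF p2] .
  have ivI: "interval (I i)" using fam_iv[OF fam1 i] .
  have ivL: "interval (L j)" using fam_iv[OF fam2 j] .
  have uw: "u < w"
  proof (rule ccontr)
    assume "\<not> u < w" then have "w \<le> u" by simp
    then have "u \<in> L j" using interval_conv[OF ivL w(2) v(1), of u] uv by simp
    then show False using u(3) by simp
  qed
  have wv: "w < v"
  proof (rule ccontr)
    assume "\<not> w < v" then have "v \<le> w" by simp
    then have "v \<in> I i" using interval_conv[OF ivI u(1) w(1), of v] uv by simp
    then show False using v(3) by simp
  qed
  have Ibnd: "n < v" if "n \<in> I i" for n
  proof (rule ccontr)
    assume "\<not> n < v" then have "v \<le> n" by simp
    then have "v \<in> I i" using interval_conv[OF ivI u(1) that, of v] uv by simp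
    then show False using v(3) by simp
  qed
  have fI: "finite (I i)" by (rule finite_subset[of _ "{..<v}"]) (use Ibnd in auto)
  have gI: "good x (I i)" by (rule GOOD[OF p1 i])
  define a where "a = Min (I i)"
  define b where "b = Max (I i)"
  have neI: "I i \<noteq> {}" using u(1) by blast
  have ab_in: "a \<in> I i" "b \<in> I i" using Min_in[OF fI neI] Max_in[OF fI neI] a_def b_def by auto
  have ab_s: "a \<in> supp x" "b \<in> supp x" using gI fI unfolding good_def a_def b_def by auto
  have Ieq: "I i = {a..b}" using interval_fin_eq[OF ivI fI] a_def b_def by simp
  define l where "l = (LEAST n. n \<in> L j)"
  have lL: "l \<in> L j" using lo_in[of "L j"] v(1) l_def by blast
  have lle: "l \<le> n" if "n \<in> L j" for n using lo_least[OF that] l_def by simp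
  have ul: "u < l"
  proof (rule ccontr)
    assume "\<not> u < l" then have "l \<le> u" by simp
    then have "u \<in> L j" using interval_conv[OF ivL lL v(1), of u] uv by simp
    then show False using u(3) by simp
  qed
  have au: "a \<le> u" using u(1) Ieq by simp
  have wb: "w \<le> b" using w(1) Ieq by simp
  have lw: "l \<le> w" using lle[OF w(2)] .
  have bv: "b < v" using Ibnd[OF ab_in(2)] .
  have a1: "1 \<le> a" using interval_ge1[OF ivI ab_in(1)] .
  have bL: "b \<in> L j" using interval_conv[OF ivL lL v(1), of b] lw wb bv by simp
  define U1 where "U1 = {a..<l}"
  define U2 where "U2 = {l..b}"
  define W where "W = {n \<in> L j. b < n}"
  have IU: "I i = U1 \<union> U2" unfolding Ieq U1_def U2_def
    by (rule ivl_disj_un_two(7)[symmetric]) (use ul au lw wb in linarith)+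
  have d12: "U1 \<inter> U2 = {}" unfolding U1_def U2_def by auto
  have U2L: "U2 \<subseteq> L j"
  proof
    fix n assume "n \<in> U2"
    then show "n \<in> L j" using interval_conv[OF ivL lL bL, of n] unfolding U2_def by simp
  qed
  have LU: "L j = U2 \<union> W" using U2L lle unfolding U2_def W_def by force
  have d2W: "U2 \<inter> W = {}" unfolding U2_def W_def by auto
  have iU1: "interval U1" unfolding U1_def by (rule interval_upto) (use a1 au ul in auto)
  have iU2: "interval U2" unfolding U2_def by (rule interval_icc) (use a1 au ul lw wb in auto)
  have vW: "v \<in> W" using v(1) bv unfolding W_def by simp
  have iW: "interval W"
    unfolding interval_def
  proof (intro conjI allI impI)
    show "W \<noteq> {}" using vW by blast
    show "W \<subseteq> {1..}" using ivL unfolding W_def interval_def by auto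
    fix p q r assume "p \<in> W" "r \<in> W" "p \<le> q" "q \<le> r"
    then show "q \<in> W" using interval_conv[OF ivL, of p r q] unfolding W_def by auto
  qed
  define A where "A = isum x U1"
  define B where "B = isum x U2"
  define C where "C = isum x W"
  have sI: "isum x (I i) = A + B" unfolding A_def B_def IU
    by (rule isum_union[OF J]) (use iU1 iU2 ivI IU d12 in auto)
  have sL: "isum x (L j) = B + C" unfolding B_def C_def LU
    by (rule isum_union[OF J]) (use iU2 iW ivL LU d2W in auto)
  have nzA: "A \<noteq> 0" unfolding A_def
    by (rule NZ[OF J N1 i IU d12 iU1 iU2, of u]) (use au ul u(2) in \<open>auto simp: U1_def\<close>)
  have nzB: "B \<noteq> 0" unfolding B_def
    by (rule NZ[OF J N1 i _ _ iU2 iU1, of w]) (use IU d12 lw wb w(3) in \<open>auto simp: U2_def\<close>)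
  have nzC: "C \<noteq> 0" unfolding C_def
    by (rule NZ[OF J N2 j _ _ iW iU2 vW v(2)]) (use LU d2W in auto)
  have AB: "A\<^sup>2 + B\<^sup>2 \<le> (A + B)\<^sup>2"
  proof -
    define E where "E k = (if k = 0 then U1 else U2)" for k :: nat
    have "(\<Sum>k<2. (isum x (E k))\<^sup>2) \<le> (\<Sum>i'\<in>{i}. (isum x (I i'))\<^sup>2)"
    proof (rule LOL[OF J N1])
      show "finite {i}" "{i} \<subseteq> F" using i by auto
      show "\<forall>k<2. interval (E k)" using iU1 iU2 unfolding E_def by auto
      show "\<forall>k<2. \<forall>k'<2. k \<noteq> k' \<longrightarrow> E k \<inter> E k' = {}" using d12 unfolding E_def by auto
      have "E k \<subseteq> I i" for k using IU unfolding E_def by auto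
      then show "\<forall>k<2. \<forall>i'\<in>F - {i}. E k \<inter> I i' = {}" using FDISJ[OF fam1 i] by blast
    qed
    then show ?thesis using sI by (simp add: E_def eval_nat_numeral A_def B_def)
  qed
  have BC: "B\<^sup>2 + C\<^sup>2 \<le> (B + C)\<^sup>2"
  proof -
    define E where "E k = (if k = 0 then U2 else W)" for k :: nat
    have "(\<Sum>k<2. (isum x (E k))\<^sup>2) \<le> (\<Sum>j'\<in>{j}. (isum x (L j'))\<^sup>2)"
    proof (rule LOL[OF J N2])
      show "finite {j}" "{j} \<subseteq> G" using j by auto
      show "\<forall>k<2. interval (E k)" using iU2 iW unfolding E_def by auto
      show "\<forall>k<2. \<forall>k'<2. k \<noteq> k' \<longrightarrow> E k \<inter> E k' = {}" using d2W unfolding E_def by auto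
      have "E k \<subseteq> L j" for k using LU unfolding E_def by auto
      then show "\<forall>k<2. \<forall>j'\<in>G - {j}. E k \<inter> L j' = {}" using FDISJ[OF fam2 j] by blast
    qed
    then show ?thesis using sL by (simp add: E_def eval_nat_numeral B_def C_def)
  qed
  define X where "X = I i \<union> L j"
  have XW: "X = I i \<union> W" using LU IU unfolding X_def by auto
  have dIW: "I i \<inter> W = {}" using Ieq unfolding W_def by auto
  have iX: "interval X" unfolding X_def by (rule interval_union[OF ivI ivL]) (use w in blast)
  have sX: "isum x X = A + B + C" using isum_union[OF J, of "I i" W] ivI iW iX XW dIW sI C_def by simp
  have TT: "(isum x X)\<^sup>2 + (isum x U2)\<^sup>2 \<le> (isum x (I i))\<^sup>2 + (isum x (L j))\<^sup>2"
  proof (rule TFE[OF J N1 N2 i j iX iU2])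
    show "\<forall>i'\<in>F. i' < i \<longrightarrow> I i' \<inter> X = {}"
    proof (intro ballI impI)
      fix i' assume i': "i' \<in> F" "i' < i"
      have "n < a" if "n \<in> I i'" for n using FORD[OF fam1 i'(1) i i'(2) that ab_in(1)] .
      moreover have "a < n" if "n \<in> L j" for n using lle[OF that] au ul by simp
      ultimately show "I i' \<inter> X = {}" using FDISJ[OF fam1 i'(1) i] i'(2) unfolding X_def by fastforce
    qed
    show "\<forall>j'\<in>G. j < j' \<longrightarrow> L j' \<inter> X = {}"
    proof (intro ballI impI)
      fix j' assume j': "j' \<in> G" "j < j'"
      have "b < n" if "n \<in> L j'" for n using FORD[OF fam2 j j'(1) j'(2) bL that] .
      moreover have "n \<le> b" if "n \<in> I i" for n using that Ieq by simp
      ultimately show "L j' \<inter> X = {}" using FDISJ[OF fam2 j'(1) j] j'(2) unfolding X_def by fastforce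
    qed
    show "\<forall>i'\<in>F. \<forall>j'\<in>G. i' < i \<longrightarrow> j < j' \<longrightarrow> I i' \<inter> L j' = {}"
    proof (intro ballI impI)
      fix i' j' assume i': "i' \<in> F" "j' \<in> G" "i' < i" "j < j'"
      have "n < a" if "n \<in> I i'" for n using FORD[OF fam1 i'(1) i i'(3) that ab_in(1)] .
      moreover have "b < n" if "n \<in> L j'" for n using FORD[OF fam2 j i'(2) i'(4) bL that] .
      ultimately show "I i' \<inter> L j' = {}" using au ul lw wb by fastforce
    qed
    show "\<forall>j'\<in>G. j' < j \<longrightarrow> L j' \<inter> U2 = {}"
      using FDISJ[OF fam2 _ j] U2L by blast
    show "\<forall>i'\<in>F. i < i' \<longrightarrow> I i' \<inter> U2 = {}"
      using FDISJ[OF fam1 _ i] IU by blast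
    show "\<forall>i'\<in>F. \<forall>j'\<in>G. i < i' \<longrightarrow> j' < j \<longrightarrow> I i' \<inter> L j' = {}"
    proof (intro ballI impI)
      fix i' j' assume i': "i' \<in> F" "j' \<in> G" "i < i'" "j' < j"
      have "b < n" if "n \<in> I i'" for n using FORD[OF fam1 i i'(1) i'(3) ab_in(2) that] .
      moreover have "n < l" if "n \<in> L j'" for n using FORD[OF fam2 i'(2) j i'(4) that lL] .
      ultimately show "I i' \<inter> L j' = {}" using lw wb by fastforce
    qed
  qed
  then have "(A + B + C)\<^sup>2 + B\<^sup>2 \<le> (A + B)\<^sup>2 + (B + C)\<^sup>2" using sX sI sL B_def by simp
  then show False using arith_cross[OF nzA nzB nzC AB BC] by simp
qed

lemma LAM:
  assumes J: "in_J x" and p1: "norming_partition x F I" and p2: "norming_partition x G L"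
    and i: "i \<in> F" and j: "j \<in> G"
  shows "I i \<inter> L j \<inter> supp x = {} \<or> I i \<inter> supp x \<subseteq> L j \<or> L j \<inter> supp x \<subseteq> I i"
proof (rule ccontr)
  assume "\<not> ?thesis"
  then obtain u v w where u: "u \<in> I i" "u \<in> supp x" "u \<notin> L j"
    and v: "v \<in> L j" "v \<in> supp x" "v \<notin> I i"
    and w: "w \<in> I i" "w \<in> L j" "w \<in> supp x" by blast
  have "u \<noteq> v" using u v by blast
  then show False
  proof (cases "u < v")
    case True then show False using CROSS[OF J p1 p2 i j u v w] by blast
  next
    case False then have "v < u" using \<open>u \<noteq> v\<close> by simp
    then show False using CROSS[OF J p2 p1 j i v u w(2) w(1) w(3)] by blast
  qed
qed



definition lo :: "(nat \<Rightarrow> real) \<Rightarrow> nat set \<Rightarrow> nat" where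
  "lo x K = (LEAST n. n \<in> K \<inter> supp x)"

definition minimal :: "(nat \<Rightarrow> real) \<Rightarrow> nat set set \<Rightarrow> nat set \<Rightarrow> bool" where
  "minimal x CC K \<longleftrightarrow> K \<in> CC \<and> (\<forall>K'\<in>CC. K \<inter> K' \<inter> supp x \<noteq> {} \<longrightarrow> K \<inter> supp x \<subseteq> K')"

definition Qs :: "(nat \<Rightarrow> real) \<Rightarrow> nat set set \<Rightarrow> nat set" where
  "Qs x CC = {lo x K | K. minimal x CC K}"

definition Nq :: "(nat \<Rightarrow> real) \<Rightarrow> nat set set \<Rightarrow> nat \<Rightarrow> nat set" where
  "Nq x CC q = (SOME K. minimal x CC K \<and> lo x K = q)"

definition Hs :: "(nat \<Rightarrow> real) \<Rightarrow> nat set set \<Rightarrow> nat set" where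
  "Hs x CC = (if finite (Qs x CC) then {1..card (Qs x CC)} else {1..})"

definition en :: "(nat \<Rightarrow> real) \<Rightarrow> nat set set \<Rightarrow> nat \<Rightarrow> nat" where
  "en x CC p = enumerate (Qs x CC) (p - 1)"

definition Ns :: "(nat \<Rightarrow> real) \<Rightarrow> nat set set \<Rightarrow> nat \<Rightarrow> nat set" where
  "Ns x CC p = Nq x CC (en x CC p)"

lemma lo_eq: "K \<inter> supp x = K' \<inter> supp x \<Longrightarrow> lo x K = lo x K'"
  unfolding lo_def by simp

lemma lo_mem: "K \<inter> supp x \<noteq> {} \<Longrightarrow> lo x K \<in> K \<and> lo x K \<in> supp x"
  unfolding lo_def using lo_in[of "K \<inter> supp x"] by blast

lemma lo_le: "n \<in> K \<Longrightarrow> n \<in> supp x \<Longrightarrow> lo x K \<le> n"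
  unfolding lo_def by (rule Least_le) simp

locale two_parts =
  fixes x :: "nat \<Rightarrow> real" and F G :: "nat set" and I L :: "nat \<Rightarrow> nat set"
  assumes J: "in_J x" and p1: "norming_partition x F I" and p2: "norming_partition x G L"
begin

abbreviation "CC \<equiv> I ` F \<union> L ` G"

lemma swp: "two_parts x G F L I" using J p1 p2 by (simp add: two_parts_def)

lemma CC_sym: "L ` G \<union> I ` F = CC" by blast

lemma fam1: "interval_family F I" using part_fam[OF p1] .
lemma fam2: "interval_family G L" using part_fam[OF p2] .

lemma good_CC: "K \<in> CC \<Longrightarrow> good x K" using GOOD[OF p1] GOOD[OF p2] by blast

lemma ne_CC: "K \<in> CC \<Longrightarrow> K \<inter> supp x \<noteq> {}" using good_CC good_supp_ne by blast

lemma same1: "i \<in> F \<Longrightarrow> i' \<in> F \<Longrightarrow> I i \<inter> I i' \<inter> supp x \<noteq> {} \<Longrightarrow> i = i'"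
  using FDISJ[OF fam1] by blast

lemma same2: "j \<in> G \<Longrightarrow> j' \<in> G \<Longrightarrow> L j \<inter> L j' \<inter> supp x \<noteq> {} \<Longrightarrow> j = j'"
  using FDISJ[OF fam2] by blast

lemma min1: assumes i: "i \<in> F" and j: "j \<in> G" and sub: "I i \<inter> supp x \<subseteq> L j"
  shows "minimal x CC (I i)"
  unfolding minimal_def
proof (intro conjI ballI impI)
  show "I i \<in> CC" using i by blast
  fix K' assume K': "K' \<in> CC" and ov: "I i \<inter> K' \<inter> supp x \<noteq> {}"
  show "I i \<inter> supp x \<subseteq> K'"
  proof (cases "K' \<in> I ` F")
    case True
    then obtain i' where i': "i' \<in> F" "K' = I i'" by blast
    then have "i = i'" using same1[OF i i'(1)] ov by blast
    then show ?thesis using i' by blast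
  next
    case False
    then obtain j' where j': "j' \<in> G" "K' = L j'" using K' by blast
    have "I i \<inter> L j' \<inter> supp x = {} \<or> I i \<inter> supp x \<subseteq> L j' \<or> L j' \<inter> supp x \<subseteq> I i"
      by (rule LAM[OF J p1 p2 i j'(1)])
    then show ?thesis
    proof (elim disjE)
      assume "I i \<inter> L j' \<inter> supp x = {}" then show ?thesis using ov j' by blast
    next
      assume "I i \<inter> supp x \<subseteq> L j'" then show ?thesis using j' by blast
    next
      assume a: "L j' \<inter> supp x \<subseteq> I i"
      have "L j' \<inter> supp x \<noteq> {}" using ne_CC j' by blast
      then have "L j \<inter> L j' \<inter> supp x \<noteq> {}" using a sub by blast
      then have "j = j'" using same2[OF j j'(1)] by blast
      then show ?thesis using sub j' by blast
    qed
  qed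
qed

end

lemma (in two_parts) min2: assumes i: "i \<in> F" and j: "j \<in> G" and sub: "L j \<inter> supp x \<subseteq> I i"
  shows "minimal x CC (L j)"
  using two_parts.min1[OF swp j i sub] CC_sym by simp

context two_parts begin

lemma cover_min: assumes n: "n \<in> supp x" shows "\<exists>K. minimal x CC K \<and> n \<in> K"
proof -
  obtain i where i: "i \<in> F" "n \<in> I i" using COVER[OF J part_norm[OF p1] n] by blast
  obtain j where j: "j \<in> G" "n \<in> L j" using COVER[OF J part_norm[OF p2] n] by blast
  have "I i \<inter> L j \<inter> supp x = {} \<or> I i \<inter> supp x \<subseteq> L j \<or> L j \<inter> supp x \<subseteq> I i"
    by (rule LAM[OF J p1 p2 i(1) j(1)])
  then show ?thesis
  proof (elim disjE)
    assume "I i \<inter> L j \<inter> supp x = {}" then show ?thesis using i j n by blast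
  next
    assume "I i \<inter> supp x \<subseteq> L j" then show ?thesis using min1[OF i(1) j(1)] i by blast
  next
    assume "L j \<inter> supp x \<subseteq> I i" then show ?thesis using min2[OF i(1) j(1)] j by blast
  qed
qed

lemma min_CC: "minimal x CC K \<Longrightarrow> K \<in> CC" unfolding minimal_def by blast

lemma min_ov: assumes m: "minimal x CC K" "minimal x CC K'" and ov: "K \<inter> K' \<inter> supp x \<noteq> {}"
  shows "K \<inter> supp x = K' \<inter> supp x"
proof -
  have "K \<inter> supp x \<subseteq> K'" using m(1) min_CC[OF m(2)] ov unfolding minimal_def by blast
  moreover have "K' \<inter> supp x \<subseteq> K" using m(2) min_CC[OF m(1)] ov unfolding minimal_def by blast
  ultimately show ?thesis by blast
qed

lemma min_disj: assumes m: "minimal x CC K" "minimal x CC K'" and ne: "K \<inter> supp x \<noteq> K' \<inter> supp x"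
  shows "K \<inter> K' = {}"
proof (rule ccontr)
  assume "K \<inter> K' \<noteq> {}"
  then obtain n where n: "n \<in> K" "n \<in> K'" by blast
  have "K \<inter> K' \<inter> supp x \<noteq> {}" by (rule DS[OF good_CC[OF min_CC[OF m(1)]] good_CC[OF min_CC[OF m(2)]] n])
  then show False using min_ov[OF m] ne by blast
qed

lemma min_lo: assumes m: "minimal x CC K" shows "lo x K \<in> K" "lo x K \<in> supp x"
  using lo_mem[OF ne_CC[OF min_CC[OF m]]] by simp_all

abbreviation "Q \<equiv> Qs x CC"

lemma Q_supp: assumes "q \<in> Q" shows "q \<in> supp x"
proof -
  obtain K where "minimal x CC K" "q = lo x K" using assms unfolding Qs_def by blast
  then show ?thesis using min_lo(2) by simp
qed

lemma Nq_props: assumes q: "q \<in> Q" shows "minimal x CC (Nq x CC q)" "lo x (Nq x CC q) = q"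
proof -
  have "\<exists>K. minimal x CC K \<and> lo x K = q" using q unfolding Qs_def by blast
  then have "minimal x CC (Nq x CC q) \<and> lo x (Nq x CC q) = q" unfolding Nq_def by (rule someI_ex)
  then show "minimal x CC (Nq x CC q)" "lo x (Nq x CC q) = q" by auto
qed

lemma Nq_in: "q \<in> Q \<Longrightarrow> q \<in> Nq x CC q" using min_lo(1)[OF Nq_props(1)] Nq_props(2) by metis

lemma Nq_supp: assumes q: "q \<in> Q" and m: "minimal x CC K" and qK: "q \<in> K"
  shows "K \<inter> supp x = Nq x CC q \<inter> supp x"
  by (rule min_ov[OF m Nq_props(1)[OF q]]) (use q qK Nq_in[OF q] Q_supp[OF q] in blast)

lemma Nq_disj: assumes q: "q \<in> Q" "q' \<in> Q" "q \<noteq> q'" shows "Nq x CC q \<inter> Nq x CC q' = {}"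
proof (rule min_disj[OF Nq_props(1)[OF q(1)] Nq_props(1)[OF q(2)]])
  show "Nq x CC q \<inter> supp x \<noteq> Nq x CC q' \<inter> supp x"
  proof
    assume "Nq x CC q \<inter> supp x = Nq x CC q' \<inter> supp x"
    then have "lo x (Nq x CC q) = lo x (Nq x CC q')" by (rule lo_eq)
    then show False using Nq_props(2)[OF q(1)] Nq_props(2)[OF q(2)] q(3) by simp
  qed
qed

lemma Nq_order: assumes q: "q \<in> Q" "q' \<in> Q" "q < q'" and a: "a \<in> Nq x CC q" and b: "b \<in> Nq x CC q'"
  shows "a < b"
proof (rule interval_order[OF _ _ Nq_disj[OF q(1,2)] Nq_in[OF q(1)] Nq_in[OF q(2)] q(3) a b])
  show "interval (Nq x CC q)" by (rule good_iv[OF good_CC[OF min_CC[OF Nq_props(1)[OF q(1)]]]])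
  show "interval (Nq x CC q')" by (rule good_iv[OF good_CC[OF min_CC[OF Nq_props(1)[OF q(2)]]]])
  show "q \<noteq> q'" using q(3) by simp
qed

end



lemma next_in_fam: assumes fam: "interval_family F I" and i: "i \<in> F" and nl: "enat i < supE F"
  shows "Suc i \<in> F"
proof (cases "finite F")
  case True
  have "i < Max F" using nl supE_fin[OF True] by simp
  then show ?thesis using fam_conv[OF fam i Max_in[OF True], of "Suc i"] i by auto
next
  case False
  then have "F = {1..}" using fam_F[OF fam] by auto
  then show ?thesis by simp
qed

context two_parts begin

abbreviation "H \<equiv> Hs x CC"
abbreviation "N \<equiv> Ns x CC"
abbreviation "e \<equiv> en x CC"

lemma H_ge1: "p \<in> H \<Longrightarrow> 1 \<le> p" unfolding Hs_def by (auto split: if_splits)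

lemma en_Q: assumes p: "p \<in> H" shows "e p \<in> Q"
proof (cases "finite Q")
  case True
  then have "p - 1 < card Q" using p unfolding Hs_def by auto
  then show ?thesis unfolding en_def using finite_enumerate_in_set[OF True] by blast
next
  case False then show ?thesis unfolding en_def using enumerate_in_set by blast
qed

lemma en_mono: assumes p: "p \<in> H" "p' \<in> H" "p < p'" shows "e p < e p'"
proof (cases "finite Q")
  case True
  then have "p' - 1 < card Q" "p - 1 < p' - 1" using p unfolding Hs_def by auto
  then show ?thesis unfolding en_def using finite_enumerate_mono[OF _ True] by blast
next
  case False
  have "p - 1 < p' - 1" using p H_ge1 by fastforce
  then show ?thesis unfolding en_def using enumerate_mono[OF _ False] by blast
qed

lemma en_le: assumes p: "p \<in> H" "p' \<in> H" "p \<le> p'" shows "e p \<le> e p'"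
  using en_mono[OF p(1,2)] p(3) by (cases "p = p'") auto

lemma en_surj: assumes q: "q \<in> Q" shows "\<exists>p\<in>H. e p = q"
proof (cases "finite Q")
  case True
  then obtain n where n: "n < card Q" "enumerate Q n = q" using finite_enumerate_Ex[OF True q] by blast
  have "Suc n \<in> H" using n True unfolding Hs_def by auto
  moreover have "e (Suc n) = q" using n unfolding en_def by simp
  ultimately show ?thesis by blast
next
  case False
  then obtain n where n: "enumerate Q n = q" using enumerate_Ex[OF False q] by blast
  have "Suc n \<in> H" using False unfolding Hs_def by auto
  moreover have "e (Suc n) = q" using n unfolding en_def by simp
  ultimately show ?thesis by blast
qed

lemma en_inj: assumes p: "p \<in> H" "p' \<in> H" "e p = e p'" shows "p = p'"
  using en_mono[OF p(1,2)] en_mono[OF p(2,1)] p(3) by (cases "p < p'"; cases "p' < p") auto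

lemma N_min: "p \<in> H \<Longrightarrow> minimal x CC (N p)"
  unfolding Ns_def using Nq_props(1)[OF en_Q] by blast

lemma N_lo: "p \<in> H \<Longrightarrow> lo x (N p) = e p"
  unfolding Ns_def using Nq_props(2)[OF en_Q] by blast

lemma N_e: "p \<in> H \<Longrightarrow> e p \<in> N p"
  unfolding Ns_def using Nq_in[OF en_Q] by blast

lemma N_CC: "p \<in> H \<Longrightarrow> N p \<in> CC" using min_CC[OF N_min] .

lemma N_iv: "p \<in> H \<Longrightarrow> interval (N p)" using good_iv[OF good_CC[OF N_CC]] .

lemma N_order: assumes p: "p \<in> H" "p' \<in> H" "p < p'" and a: "a \<in> N p" and b: "b \<in> N p'"
  shows "a < b"
  using Nq_order[OF en_Q[OF p(1)] en_Q[OF p(2)] en_mono[OF p] ] a b unfolding Ns_def .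

lemma N_fam: "interval_family H N"
proof -
  have "(\<exists>k. H = {1..k}) \<or> H = {1..}" unfolding Hs_def by auto
  moreover have "\<forall>i\<in>H. interval (N i)" using N_iv by blast
  moreover have "\<forall>i. i \<in> H \<longrightarrow> Suc i \<in> H \<longrightarrow> (\<forall>a\<in>N i. \<forall>b\<in>N (Suc i). a < b)"
  proof (intro allI impI ballI)
    fix i a b assume "i \<in> H" "Suc i \<in> H" "a \<in> N i" "b \<in> N (Suc i)"
    then show "a < b" using N_order[of i "Suc i" a b] by simp
  qed
  ultimately show ?thesis unfolding interval_family_def by blast
qed

lemma N_cover: assumes n: "n \<in> supp x" shows "\<exists>p\<in>H. n \<in> N p"
proof -
  obtain K where K: "minimal x CC K" "n \<in> K" using cover_min[OF n] by blast
  have q: "lo x K \<in> Q" using K(1) unfolding Qs_def by blast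
  obtain p where p: "p \<in> H" "e p = lo x K" using en_surj[OF q] by blast
  have "K \<inter> supp x = Nq x CC (lo x K) \<inter> supp x" by (rule Nq_supp[OF q K(1) min_lo(1)[OF K(1)]])
  then have "n \<in> Nq x CC (lo x K)" using K(2) n by blast
  then have "n \<in> N p" using p(2) unfolding Ns_def by simp
  then show ?thesis using p(1) by blast
qed

lemma N_sub: assumes p: "p \<in> H" and K: "K \<in> CC" and n: "n \<in> N p" "n \<in> K" "n \<in> supp x"
  shows "N p \<inter> supp x \<subseteq> K"
  using N_min[OF p] K n unfolding minimal_def by blast

lemma N_nonlast_gen: assumes pp: "norming_partition x F' I'" and i: "i \<in> F'" and p: "p \<in> H"
  and eq: "N p = I' i" and nl: "enat p < supE H"
  shows "finite (N p) \<and> Min (N p) \<in> supp x \<and> Max (N p) \<in> supp x"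
proof -
  have sp: "Suc p \<in> H" using next_in_fam[OF N_fam p nl] .
  have n: "e (Suc p) \<in> supp x" using Q_supp[OF en_Q[OF sp]] .
  have lt: "\<forall>a\<in>I' i. a < e (Suc p)" using N_order[OF p sp _ _ N_e[OF sp]] eq by auto
  have "enat i < supE F'" by (rule PL[OF pp i n lt])
  then show ?thesis using nonlast_props[OF pp i] eq by simp
qed

lemma N_last_gen: assumes pp: "norming_partition x F' I'" and i: "i \<in> F'" and p: "p \<in> H"
  and eq: "N p = I' i" and fH: "finite H" and mx: "p = Max H"
  shows "Min (N p) \<in> supp x \<and> supE (N p) = supE (supp x)"
proof -
  have "\<not> enat i < supE F'"
  proof
    assume nl: "enat i < supE F'"
    have si: "Suc i \<in> F'" using next_in[OF pp i nl] .
    obtain n where n: "n \<in> I' (Suc i)" "n \<in> supp x"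
      using good_supp_ne[OF GOOD[OF pp si]] by blast
    have lt: "a < n" if "a \<in> I' i" for a using FORD[OF part_fam[OF pp] i si _ that n(1)] by simp
    obtain p' where p': "p' \<in> H" "n \<in> N p'" using N_cover[OF n(2)] by blast
    have c: "e p \<in> I' i" using N_e[OF p] eq by simp
    show False
    proof (cases "p' < p")
      case True
      then have "n < e p" using N_order[OF p'(1) p True p'(2) N_e[OF p]] by simp
      then show False using lt[OF c] by simp
    next
      case False
      show False
      proof (cases "p' = p")
        case True then show False using p'(2) eq lt by fastforce
      next
        case False2: False
        then have "p < p'" using False by simp
        moreover have "p' \<le> Max H" using Max_ge[OF fH p'(1)] .
        ultimately show False using mx by simp
      qed
    qed
  qed
  then show ?thesis using last_props[OF pp i] eq by simp
qed

end



context two_parts begin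

lemma Q_fin_if: assumes "finite F" "finite G" shows "finite Q"
proof -
  have "Q \<subseteq> (\<lambda>K. lo x K) ` CC"
  proof
    fix q assume "q \<in> Q"
    then obtain K where K: "minimal x CC K" "q = lo x K" unfolding Qs_def by blast
    have "K \<in> CC" by (rule min_CC[OF K(1)])
    then show "q \<in> (\<lambda>K. lo x K) ` CC" using K(2) by (rule rev_image_eqI)
  qed
  moreover have "finite CC" using assms by simp
  then have "finite ((\<lambda>K. lo x K) ` CC)" by (rule finite_imageI)
  ultimately show ?thesis by (rule finite_subset)
qed

lemma SL: assumes C0: "finite G \<or> infinite F" and k: "k \<in> F"
  shows "finite {q\<in>Q. q \<in> I k} \<and> (isum x (I k))\<^sup>2 \<le> (\<Sum>q\<in>{q\<in>Q. q \<in> I k}. (isum x (Nq x CC q))\<^sup>2)"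
proof -
  define Qk where "Qk = {q\<in>Q. q \<in> I k}"
  have ivk: "interval (I k)" using fam_iv[OF fam1 k] .
  have fIk: "finite (I k)" if "infinite F"
  proof -
    have "supE F = \<infinity>" using supE_inf[OF that] .
    then have "enat k < supE F" by simp
    then show ?thesis using nonlast_props[OF p1 k] by simp
  qed
  have fQk: "finite Qk"
  proof (cases "finite (I k)")
    case True then show ?thesis unfolding Qk_def by (rule rev_finite_subset) blast
  next
    case False
    have "\<not> enat k < supE F" using nonlast_props[OF p1 k] False by blast
    then have fF: "finite F" using last_of[OF p1 k] by blast
    then have "finite G" using C0 by blast
    then have "finite Q" using Q_fin_if fF by blast
    then show ?thesis unfolding Qk_def by simp
  qed
  have ineq: "(isum x (I k))\<^sup>2 \<le> (\<Sum>q\<in>Qk. (isum x (Nq x CC q))\<^sup>2)"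
  proof (cases "minimal x CC (I k)")
    case True
    define q0 where "q0 = lo x (I k)"
    have q0Q: "q0 \<in> Q" unfolding q0_def Qs_def using True by blast
    have q0I: "q0 \<in> I k" unfolding q0_def using min_lo(1)[OF True] .
    have "Qk = {q0}"
    proof
      show "{q0} \<subseteq> Qk" using q0Q q0I unfolding Qk_def by blast
      show "Qk \<subseteq> {q0}"
      proof
        fix q assume "q \<in> Qk"
        then have q: "q \<in> Q" "q \<in> I k" unfolding Qk_def by auto
        have "I k \<inter> supp x = Nq x CC q \<inter> supp x" by (rule Nq_supp[OF q(1) True q(2)])
        then have "lo x (I k) = lo x (Nq x CC q)" by (rule lo_eq)
        then show "q \<in> {q0}" using Nq_props(2)[OF q(1)] q0_def by simp
      qed
    qed
    moreover have "isum x (Nq x CC q0) = isum x (I k)"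
    proof (rule isum_supp)
      show "interval (Nq x CC q0)" using good_iv[OF good_CC[OF min_CC[OF Nq_props(1)[OF q0Q]]]] .
      show "interval (I k)" by (rule ivk)
      show "Nq x CC q0 \<inter> supp x = I k \<inter> supp x" using Nq_supp[OF q0Q True q0I] by simp
    qed
    ultimately show ?thesis by simp
  next
    case False
    then obtain K' where K': "K' \<in> CC" "I k \<inter> K' \<inter> supp x \<noteq> {}" "\<not> I k \<inter> supp x \<subseteq> K'"
      unfolding minimal_def using k by blast
    have "K' \<notin> I ` F"
    proof
      assume "K' \<in> I ` F"
      then obtain i' where i': "i' \<in> F" "K' = I i'" by blast
      then have "k = i'" using same1[OF k i'(1)] K'(2) by blast
      then show False using K'(3) i' by blast
    qed
    then obtain j0 where j0: "j0 \<in> G" "K' = L j0" using K'(1) by blast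
    have j0s: "L j0 \<inter> supp x \<subseteq> I k"
      using LAM[OF J p1 p2 k j0(1)] K'(2,3) j0(2) by blast
    define R where "R = {j\<in>G. L j \<inter> supp x \<subseteq> I k}"
    have j0R: "j0 \<in> R" using j0 j0s unfolding R_def by blast
    define phi where "phi j = lo x (L j)" for j
    have Rmin: "minimal x CC (L j)" if "j \<in> R" for j
      using min2[OF k _ ] that unfolding R_def by blast
    have phiQ: "phi j \<in> Q" if "j \<in> R" for j unfolding phi_def Qs_def using Rmin[OF that] by blast
    have phiL: "phi j \<in> L j" "phi j \<in> supp x" if "j \<in> R" for j
      unfolding phi_def using min_lo[OF Rmin[OF that]] by auto
    have phiQk: "phi j \<in> Qk" if "j \<in> R" for j
      using phiQ[OF that] phiL[OF that] that unfolding Qk_def R_def by blast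
    have injphi: "inj_on phi R"
    proof (rule inj_onI)
      fix j j' assume jj: "j \<in> R" "j' \<in> R" "phi j = phi j'"
      have "L j \<inter> L j' \<inter> supp x \<noteq> {}" using phiL[OF jj(1)] phiL[OF jj(2)] jj(3) by auto
      then show "j = j'" using same2 jj(1,2) unfolding R_def by blast
    qed
    have fR: "finite R"
    proof (cases "finite G")
      case True then show ?thesis unfolding R_def by simp
    next
      case False
      then have "infinite F" using C0 by blast
      then have "finite (I k)" using fIk by blast
      moreover have "phi ` R \<subseteq> I k" using phiQk unfolding Qk_def by blast
      ultimately have "finite (phi ` R)" by (rule rev_finite_subset)
      then show ?thesis using finite_imageD injphi by blast
    qed
    have "(\<Sum>kk<Suc 0. (isum x ((\<lambda>_. I k) kk))\<^sup>2) \<le> (\<Sum>j\<in>R. (isum x (L j))\<^sup>2)"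
    proof (rule LOL[OF J part_norm[OF p2] fR])
      show "R \<subseteq> G" unfolding R_def by blast
      show "\<forall>kk<Suc 0. interval ((\<lambda>_. I k) kk)" using ivk by simp
      show "\<forall>kk<Suc 0. \<forall>k'<Suc 0. kk \<noteq> k' \<longrightarrow> (\<lambda>_. I k) kk \<inter> (\<lambda>_. I k) k' = {}" by simp
      show "\<forall>kk<Suc 0. \<forall>j\<in>G - R. (\<lambda>_. I k) kk \<inter> L j = {}"
      proof (intro allI impI ballI)
        fix kk j assume j: "j \<in> G - R"
        show "(\<lambda>_. I k) kk \<inter> L j = {}"
        proof (rule ccontr)
          assume "(\<lambda>_. I k) kk \<inter> L j \<noteq> {}"
          then obtain y where y: "y \<in> I k" "y \<in> L j" by auto
          have ov: "I k \<inter> L j \<inter> supp x \<noteq> {}"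
            by (rule DS[OF GOOD[OF p1 k] GOOD[OF p2] y]) (use j in blast)
          have "I k \<inter> L j \<inter> supp x = {} \<or> I k \<inter> supp x \<subseteq> L j \<or> L j \<inter> supp x \<subseteq> I k"
            using LAM[OF J p1 p2 k] j by blast
          then show False
          proof (elim disjE)
            assume "I k \<inter> L j \<inter> supp x = {}" then show False using ov by blast
          next
            assume a: "I k \<inter> supp x \<subseteq> L j"
            have "L j0 \<inter> supp x \<noteq> {}" using ne_CC j0 by blast
            then have "L j0 \<inter> L j \<inter> supp x \<noteq> {}" using a j0s by blast
            then have "j0 = j" using same2[OF j0(1)] j by blast
            then show False using j j0R by blast
          next
            assume "L j \<inter> supp x \<subseteq> I k" then show False using j unfolding R_def by blast
          qed
        qed
      qed
    qed
    then have i1: "(isum x (I k))\<^sup>2 \<le> (\<Sum>j\<in>R. (isum x (L j))\<^sup>2)" by simp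
    have "(\<Sum>j\<in>R. (isum x (L j))\<^sup>2) = (\<Sum>j\<in>R. (isum x (Nq x CC (phi j)))\<^sup>2)"
    proof (rule sum.cong[OF refl])
      fix j assume j: "j \<in> R"
      have "isum x (L j) = isum x (Nq x CC (phi j))"
      proof (rule isum_supp)
        show "interval (L j)" using good_iv[OF good_CC[OF min_CC[OF Rmin[OF j]]]] .
        show "interval (Nq x CC (phi j))" using good_iv[OF good_CC[OF min_CC[OF Nq_props(1)[OF phiQ[OF j]]]]] .
        show "L j \<inter> supp x = Nq x CC (phi j) \<inter> supp x" by (rule Nq_supp[OF phiQ[OF j] Rmin[OF j] phiL(1)[OF j]])
      qed
      then show "(isum x (L j))\<^sup>2 = (isum x (Nq x CC (phi j)))\<^sup>2" by simp
    qed
    also have "\<dots> = (\<Sum>q\<in>phi ` R. (isum x (Nq x CC q))\<^sup>2)"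
      by (rule sum.reindex[OF injphi, symmetric, unfolded comp_def])
    also have "\<dots> \<le> (\<Sum>q\<in>Qk. (isum x (Nq x CC q))\<^sup>2)"
      by (rule sum_mono2[OF fQk]) (use phiQk in auto)
    finally show ?thesis using i1 by simp
  qed
  show ?thesis using fQk ineq unfolding Qk_def by blast
qed

lemma LB: assumes C0: "finite G \<or> infinite F"
  shows "\<exists>Q'. finite Q' \<and> Q' \<subseteq> Q \<and> P x F I m \<le> (\<Sum>q\<in>Q'. (isum x (Nq x CC q))\<^sup>2)"
proof -
  define Qk where "Qk k = {q\<in>Q. q \<in> I k}" for k
  define Q' where "Q' = (\<Union>k\<in>F \<inter> {..m}. Qk k)"
  have fin: "finite (Qk k)" if "k \<in> F" for k using SL[OF C0 that] unfolding Qk_def by blast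
  have le: "(isum x (I k))\<^sup>2 \<le> (\<Sum>q\<in>Qk k. (isum x (Nq x CC q))\<^sup>2)" if "k \<in> F" for k
    using SL[OF C0 that] unfolding Qk_def by blast
  have fQ': "finite Q'" unfolding Q'_def using fin by blast
  have sub: "Q' \<subseteq> Q" unfolding Q'_def Qk_def by blast
  have "P x F I m \<le> (\<Sum>k\<in>F \<inter> {..m}. (\<Sum>q\<in>Qk k. (isum x (Nq x CC q))\<^sup>2))"
    unfolding P_def by (rule sum_mono) (use le in blast)
  also have "\<dots> = (\<Sum>q\<in>Q'. (isum x (Nq x CC q))\<^sup>2)"
    unfolding Q'_def
  proof (rule sum.UNION_disjoint[symmetric])
    show "finite (F \<inter> {..m})" by simp
    show "\<forall>k\<in>F \<inter> {..m}. finite (Qk k)" using fin by blast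
    show "\<forall>k\<in>F \<inter> {..m}. \<forall>k'\<in>F \<inter> {..m}. k \<noteq> k' \<longrightarrow> Qk k \<inter> Qk k' = {}"
      using FDISJ[OF fam1] unfolding Qk_def by blast
  qed
  finally show ?thesis using fQ' sub by blast
qed

end



context two_parts begin

lemma NORM: "fam_norm x H N = jnorm x"
proof -
  define f where "f p = (if p \<in> H then (isum x (N p))\<^sup>2 else 0)" for p
  have f0: "0 \<le> f p" for p by (simp add: f_def)
  have Pf: "P x H N m = (\<Sum>p\<le>m. f p)" for m
  proof -
    have "H \<inter> {..m} = {..m} \<inter> H" by blast
    then have "P x H N m = (\<Sum>p\<in>{..m} \<inter> H. (isum x (N p))\<^sup>2)" by (simp add: P_def)
    also have "\<dots> = (\<Sum>p\<le>m. f p)" unfolding f_def by (rule sum.inter_restrict) simp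
    finally show ?thesis .
  qed
  have Pb: "(\<Sum>p\<le>m. f p) \<le> (jnorm x)\<^sup>2" for m using P_bound[OF J N_fam, of m] Pf by simp
  have sf: "summable f" by (rule bounded_imp_summable[OF f0, where B="(jnorm x)\<^sup>2"]) (rule Pb)
  have up: "suminf f \<le> (jnorm x)\<^sup>2"
  proof (rule LIMSEQ_le_const2[OF summable_LIMSEQ'[OF sf]])
    show "\<exists>N. \<forall>n\<ge>N. (\<Sum>i\<le>n. f i) \<le> (jnorm x)\<^sup>2" using Pb by blast
  qed
  have FS: "(\<Sum>q\<in>Q'. (isum x (Nq x CC q))\<^sup>2) \<le> suminf f" if Q': "finite Q'" "Q' \<subseteq> Q" for Q'
  proof -
    define P' where "P' = {p\<in>H. e p \<in> Q'}"
    have inj: "inj_on e P'"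
    proof (rule inj_onI)
      fix p p' assume pp: "p \<in> P'" "p' \<in> P'" "e p = e p'"
      then have "p \<in> H" "p' \<in> H" unfolding P'_def by auto
      then show "p = p'" using en_inj pp(3) by blast
    qed
    have img: "e ` P' = Q'"
    proof
      show "e ` P' \<subseteq> Q'" by (auto simp: P'_def)
      show "Q' \<subseteq> e ` P'"
      proof
        fix q assume q: "q \<in> Q'"
        then have "q \<in> Q" using Q'(2) by auto
        then obtain p where p: "p \<in> H" "e p = q" using en_surj by blast
        then have "p \<in> P'" using q unfolding P'_def by simp
        then show "q \<in> e ` P'" using p(2) by (metis image_eqI)
      qed
    qed
    have "finite (e ` P')" using img Q'(1) by simp
    then have fP': "finite P'" by (rule finite_imageD[OF _ inj])
    have "(\<Sum>q\<in>Q'. (isum x (Nq x CC q))\<^sup>2) = (\<Sum>p\<in>P'. (isum x (Nq x CC (e p)))\<^sup>2)"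
      unfolding img[symmetric] by (rule sum.reindex[OF inj, unfolded comp_def])
    also have "\<dots> = (\<Sum>p\<in>P'. f p)"
    proof (rule sum.cong[OF refl])
      fix p assume "p \<in> P'"
      then have "p \<in> H" unfolding P'_def by simp
      then show "(isum x (Nq x CC (e p)))\<^sup>2 = f p" unfolding f_def Ns_def by simp
    qed
    also have "\<dots> \<le> suminf f" by (rule sum_le_suminf[OF sf fP']) (simp add: f0)
    finally show ?thesis .
  qed
  have low: "P x F I m \<le> suminf f" if C0: "finite G \<or> infinite F" for m
    using LB[OF C0, of m] FS by fastforce
  have low2: "P x G L m \<le> suminf f" if C0: "finite F \<or> infinite G" for m
  proof -
    obtain Q' where Q': "finite Q'" "Q' \<subseteq> Qs x (L ` G \<union> I ` F)"
      "P x G L m \<le> (\<Sum>q\<in>Q'. (isum x (Nq x (L ` G \<union> I ` F) q))\<^sup>2)"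
      using two_parts.LB[OF swp C0, of m] by blast
    then show ?thesis using FS[of Q'] unfolding CC_sym by simp
  qed
  have lower: "(jnorm x)\<^sup>2 \<le> suminf f"
  proof (cases "finite G \<or> infinite F")
    case True
    show ?thesis by (rule LIMSEQ_le_const2[OF PLIM[OF J part_norm[OF p1]]]) (use low[OF True] in blast)
  next
    case False
    then have "finite F \<or> infinite G" by blast
    then show ?thesis by (intro LIMSEQ_le_const2[OF PLIM[OF J part_norm[OF p2]]]) (use low2 in blast)
  qed
  have eqs: "suminf f = (jnorm x)\<^sup>2" using up lower by simp
  have inner: "(if finite H then (\<Sum>p\<in>H. \<bar>isum x (N p)\<bar>^2) else (\<Sum>p. if p \<in> H then \<bar>isum x (N p)\<bar>^2 else 0)) = suminf f"
  proof (cases "finite H")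
    case True
    have "suminf f = sum f H" by (rule suminf_finite[OF True]) (simp add: f_def)
    also have "\<dots> = (\<Sum>p\<in>H. \<bar>isum x (N p)\<bar>^2)" by (rule sum.cong) (auto simp: f_def)
    finally show ?thesis using True by simp
  next
    case False
    have "(\<lambda>p. if p \<in> H then \<bar>isum x (N p)\<bar>^2 else 0) = f" by (rule ext) (simp add: f_def)
    then show ?thesis using False by simp
  qed
  show ?thesis unfolding fam_norm_def inner eqs using jnorm_nonneg[OF J] by simp
qed

lemma N_part: "norming_partition x H N"
  unfolding norming_partition_def norming_family_def
proof (intro conjI ballI impI)
  show "interval_family H N" by (rule N_fam)
  show "fam_norm x H N = jnorm x" by (rule NORM)
next
  fix p assume p: "p \<in> H" and nl: "enat p < supE H"
  have "N p \<in> CC" using N_CC[OF p] .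
  then have "finite (N p) \<and> Min (N p) \<in> supp x \<and> Max (N p) \<in> supp x"
  proof
    assume "N p \<in> I ` F"
    then obtain i where "i \<in> F" "N p = I i" by blast
    then show ?thesis using N_nonlast_gen[OF p1 _ p _ nl] by blast
  next
    assume "N p \<in> L ` G"
    then obtain j where "j \<in> G" "N p = L j" by blast
    then show ?thesis using N_nonlast_gen[OF p2 _ p _ nl] by blast
  qed
  then show "finite (N p)" "Min (N p) \<in> supp x" "Max (N p) \<in> supp x" by auto
next
  fix p assume fH: "finite H" and p: "p \<in> H" and mx: "p = Max H"
  have "N p \<in> CC" using N_CC[OF p] .
  then have "Min (N p) \<in> supp x \<and> supE (N p) = supE (supp x)"
  proof
    assume "N p \<in> I ` F"
    then obtain i where "i \<in> F" "N p = I i" by blast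
    then show ?thesis using N_last_gen[OF p1 _ p _ fH mx] by blast
  next
    assume "N p \<in> L ` G"
    then obtain j where "j \<in> G" "N p = L j" by blast
    then show ?thesis using N_last_gen[OF p2 _ p _ fH mx] by blast
  qed
  then show "Min (N p) \<in> supp x" "supE (N p) = supE (supp x)" by auto
qed

lemma HI: assumes K: "K \<in> CC"
  shows "\<exists>Hi. interval Hi \<and> Hi \<subseteq> H \<and> K \<inter> supp x = (\<Union>p\<in>Hi. N p \<inter> supp x)"
proof -
  define Hi where "Hi = {p\<in>H. N p \<inter> supp x \<subseteq> K}"
  have ivK: "interval K" using good_iv[OF good_CC[OF K]] .
  have key: "\<exists>p\<in>Hi. n \<in> N p" if n: "n \<in> K" "n \<in> supp x" for n
  proof -
    obtain p where p: "p \<in> H" "n \<in> N p" using N_cover[OF n(2)] by blast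
    have "N p \<inter> supp x \<subseteq> K" by (rule N_sub[OF p(1) K p(2) n])
    then show ?thesis using p unfolding Hi_def by blast
  qed
  have eHi: "e p \<in> K" "e p \<in> supp x" if "p \<in> Hi" for p
    using N_e[of p] Q_supp[OF en_Q[of p]] that unfolding Hi_def by blast+
  have iv: "interval Hi"
    unfolding interval_def
  proof (intro conjI allI impI)
    obtain n where "n \<in> K" "n \<in> supp x" using ne_CC[OF K] by blast
    then show "Hi \<noteq> {}" using key by blast
    show "Hi \<subseteq> {1..}" using H_ge1 unfolding Hi_def by auto
    fix a b c assume abc: "a \<in> Hi" "c \<in> Hi" "a \<le> b" "b \<le> c"
    have aH: "a \<in> H" and cH: "c \<in> H" using abc unfolding Hi_def by auto
    have bH: "b \<in> H" using fam_conv[OF N_fam aH cH abc(3,4)] .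
    have "e a \<le> e b" "e b \<le> e c" using en_le[OF aH bH abc(3)] en_le[OF bH cH abc(4)] by auto
    then have ebK: "e b \<in> K" using interval_conv[OF ivK eHi(1)[OF abc(1)] eHi(1)[OF abc(2)]] by blast
    have "N b \<inter> supp x \<subseteq> K" by (rule N_sub[OF bH K N_e[OF bH] ebK Q_supp[OF en_Q[OF bH]]])
    then show "b \<in> Hi" using bH unfolding Hi_def by blast
  qed
  have "K \<inter> supp x = (\<Union>p\<in>Hi. N p \<inter> supp x)"
  proof
    show "K \<inter> supp x \<subseteq> (\<Union>p\<in>Hi. N p \<inter> supp x)" using key by blast
    show "(\<Union>p\<in>Hi. N p \<inter> supp x) \<subseteq> K \<inter> supp x" unfolding Hi_def by blast
  qed
  moreover have "Hi \<subseteq> H" unfolding Hi_def by blast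
  ultimately show ?thesis using iv by blast
qed

end

theorem corollary3p10:
  fixes x :: "nat \<Rightarrow> real" and F G :: "nat set" and I L :: "nat \<Rightarrow> nat set"
  assumes "in_J x"
    and "norming_partition x F I"
    and "norming_partition x G L"
  shows "\<exists>H N. norming_partition x H N \<and>
     (\<forall>p\<in>H. (\<exists>i\<in>F. N p = I i) \<or> (\<exists>j\<in>G. N p = L j)) \<and>
     (\<forall>i\<in>F. \<exists>Hi. interval Hi \<and> Hi \<subseteq> H \<and> I i \<inter> supp x = (\<Union>p\<in>Hi. N p \<inter> supp x)) \<and>
     (\<forall>j\<in>G. \<exists>Hj. interval Hj \<and> Hj \<subseteq> H \<and> L j \<inter> supp x = (\<Union>p\<in>Hj. N p \<inter> supp x))"
proof -
  interpret tp: two_parts x F G I L using assms by (simp add: two_parts_def)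
  have a: "norming_partition x tp.H tp.N" by (rule tp.N_part)
  have b: "\<forall>p\<in>tp.H. (\<exists>i\<in>F. tp.N p = I i) \<or> (\<exists>j\<in>G. tp.N p = L j)" using tp.N_CC by blast
  have c: "\<forall>i\<in>F. \<exists>Hi. interval Hi \<and> Hi \<subseteq> tp.H \<and> I i \<inter> supp x = (\<Union>p\<in>Hi. tp.N p \<inter> supp x)"
    using tp.HI by blast
  have d: "\<forall>j\<in>G. \<exists>Hj. interval Hj \<and> Hj \<subseteq> tp.H \<and> L j \<inter> supp x = (\<Union>p\<in>Hj. tp.N p \<inter> supp x)"
    using tp.HI by blast
  show ?thesis using a b c d by blast
qed


end
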